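(* Let $E_\alpha(x)=\sum_{k=0}^\infty \frac{x^k}{\Gamma(\alpha k+1)}$ be the Mittag-Leffler function. For $0<\alpha<1$, the function $x\mapsto E_\alpha(x)$ is log-convex on $\mathbb R$. For $\alpha>1$, it is log-concave on $(0,\infty)$. *)

theory Defs
  imports "HOL-Analysis.Analysis"
begin

definition mittag_leffler :: "real \<Rightarrow> real \<Rightarrow> real" where
  "mittag_leffler \<alpha> x = (\<Sum>k. x ^ k / Gamma (\<alpha> * real k + 1))"

definition log_convex_on :: "real set \<Rightarrow> (real \<Rightarrow> real) \<Rightarrow> bool" where
  "log_convex_on S f \<longleftrightarrow> (\<forall>x\<in>S. f x > 0) \<and> convex_on S (\<lambda>x. ln (f x))"

definition log_concave_on :: "real set \<Rightarrow> (real \<Rightarrow> real) \<Rightarrow> bool" where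
  "log_concave_on S f \<longleftrightarrow> (\<forall>x\<in>S. f x > 0) \<and> concave_on S (\<lambda>x. ln (f x))"

end

theory Submission
  imports Defs "HOL-Analysis.Analysis"
begin


lemma inv_aux: "0 < (A::real) \<Longrightarrow> 0 < B \<Longrightarrow> B \<le> c*A \<Longrightarrow> inverse A \<le> c * inverse B"
  by (simp add: field_simps)

lemma phi_concave:
  fixes \<alpha> :: real assumes a: "\<alpha> \<ge> 1"
  shows "concave_on {0..} (\<lambda>t. ln_Gamma (t+1) - ln_Gamma (\<alpha>*t+1))"
proof (rule f''_le0_imp_concave[where f' = "\<lambda>t. Digamma (t+1) - \<alpha> * Digamma (\<alpha>*t+1)"
     and f'' = "\<lambda>t. Polygamma 1 (t+1) - \<alpha>^2 * Polygamma 1 (\<alpha>*t+1)"])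
  show "convex {0::real..}" by simp
  fix t :: real assume t: "t \<in> {0..}"
  have p0: "\<alpha>*t \<ge> 0" using t a by simp
  have p1: "t + 1 > 0" "\<alpha>*t+1 > 0" using t p0 by auto
  show "((\<lambda>t. ln_Gamma (t+1) - ln_Gamma (\<alpha>*t+1)) has_real_derivative Digamma (t+1) - \<alpha> * Digamma (\<alpha>*t+1)) (at t)"
    using p1 by (auto intro!: derivative_eq_intros)
  have np: "x \<notin> \<int>\<^sub>\<le>\<^sub>0" if "x > 0" for x :: real using that by (auto elim!: nonpos_Ints_cases)
  show "((\<lambda>t. Digamma (t+1) - \<alpha> * Digamma (\<alpha>*t+1)) has_real_derivative Polygamma 1 (t+1) - \<alpha>^2 * Polygamma 1 (\<alpha>*t+1)) (at t)"
    using p1 np[OF p1(1)] np[OF p1(2)]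
    by (auto intro!: derivative_eq_intros simp: power2_eq_square)
  have s1: "(\<lambda>k. inverse ((t+1 + of_nat k)^2)) sums (Polygamma 1 (t+1))"
    using Polygamma_LIMSEQ[of "t+1" 1] p1 by (simp add: power2_eq_square)
  have s2: "(\<lambda>k. \<alpha>^2 * inverse ((\<alpha>*t+1 + of_nat k)^2)) sums (\<alpha>^2 * Polygamma 1 (\<alpha>*t+1))"
    using Polygamma_LIMSEQ[of "\<alpha>*t+1" 1] p1 by (intro sums_mult) (simp add: power2_eq_square)
  have "Polygamma 1 (t+1) \<le> \<alpha>^2 * Polygamma 1 (\<alpha>*t+1)"
  proof (rule sums_le[OF _ s1 s2])
    fix k :: nat
    have "1 * real k \<le> \<alpha> * real k" by (rule mult_right_mono[OF a]) simp
    then have "\<alpha>*t+1 + k \<le> \<alpha> * (t+1+k)" using a t by (simp add: algebra_simps)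
    then have "(\<alpha>*t+1 + k)^2 \<le> (\<alpha> * (t+1+k))^2" using p1 by (intro power_mono) auto
    then have "(\<alpha>*t+1 + k)^2 \<le> \<alpha>^2 * (t+1+k)^2" by (simp add: power_mult_distrib)
    moreover have "(t+1 + of_nat k)^2 > 0" "(\<alpha>*t+1 + of_nat k)^2 > 0" using p1 by auto
    ultimately show "inverse ((t+1 + of_nat k)^2) \<le> \<alpha>^2 * inverse ((\<alpha>*t+1 + of_nat k)^2)"
      by (rule inv_aux[rotated 2])
  qed
  then show "Polygamma 1 (t+1) - \<alpha>^2 * Polygamma 1 (\<alpha>*t+1) \<le> 0" by simp
qed


lemma major:
  fixes \<phi> :: "real \<Rightarrow> real"
  assumes conc: "concave_on {0..} \<phi>" and d: "0 \<le> d" "d \<le> d'" "d' \<le> s"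
  shows "\<phi> ((s-d')/2) + \<phi> ((s+d')/2) \<le> \<phi> ((s-d)/2) + \<phi> ((s+d)/2)"
proof (cases "d' = 0")
  case True then show ?thesis using d by simp
next
  case False
  then have d'p: "d' > 0" using d by simp
  define t where "t = (d'-d)/(2*d')"
  have t01: "0 \<le> t" "t \<le> 1" using d d'p by (auto simp: t_def field_simps)
  have xs: "(s-d')/2 \<in> {0..}" "(s+d')/2 \<in> {0..}" using d by auto
  have e1: "(1 - t) *\<^sub>R ((s-d')/2) + t *\<^sub>R ((s+d')/2) = (s-d)/2"
    using d'p by (simp add: t_def field_simps)
  have e2: "(1 - (1-t)) *\<^sub>R ((s-d')/2) + (1-t) *\<^sub>R ((s+d')/2) = (s+d)/2"
    using d'p by (simp add: t_def field_simps)
  have "(1 - t) * \<phi> ((s-d')/2) + t * \<phi> ((s+d')/2) \<le> \<phi> ((1 - t) *\<^sub>R ((s-d')/2) + t *\<^sub>R ((s+d')/2))"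
    by (rule concave_onD[OF conc t01 xs])
  then have A: "(1 - t) * \<phi> ((s-d')/2) + t * \<phi> ((s+d')/2) \<le> \<phi> ((s-d)/2)" by (simp only: e1)
  have "(1 - (1-t)) * \<phi> ((s-d')/2) + (1-t) * \<phi> ((s+d')/2) \<le> \<phi> ((1 - (1-t)) *\<^sub>R ((s-d')/2) + (1-t) *\<^sub>R ((s+d')/2))"
    using t01 by (intro concave_onD[OF conc _ _ xs]) auto
  then have B: "(1 - (1-t)) * \<phi> ((s-d')/2) + (1-t) * \<phi> ((s+d')/2) \<le> \<phi> ((s+d)/2)" by (simp only: e2)
  from A B
  show ?thesis by (simp add: algebra_simps)
qed

lemma major2:
  fixes \<phi> :: "real \<Rightarrow> real"
  assumes conc: "concave_on {0..} \<phi>" and nn: "0 \<le> x" "0 \<le> y" "0 \<le> x'" "0 \<le> y'"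
    and s: "x + y = x' + y'" and d: "\<bar>x - y\<bar> \<le> \<bar>x' - y'\<bar>"
  shows "\<phi> x' + \<phi> y' \<le> \<phi> x + \<phi> y"
proof -
  have sym: "\<phi> a + \<phi> b = \<phi> ((a+b-\<bar>a-b\<bar>)/2) + \<phi> ((a+b+\<bar>a-b\<bar>)/2)" for a b
    by (cases "a \<le> b") (auto simp: abs_if add.commute)
  have "\<phi> ((x+y-\<bar>x'-y'\<bar>)/2) + \<phi> ((x+y+\<bar>x'-y'\<bar>)/2) \<le> \<phi> ((x+y-\<bar>x-y\<bar>)/2) + \<phi> ((x+y+\<bar>x-y\<bar>)/2)"
    using major[OF conc, of "\<bar>x-y\<bar>" "\<bar>x'-y'\<bar>" "x+y"] d nn s by auto
  then show ?thesis using sym[of x y] sym[of x' y'] s by simp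
qed

lemma cheb:
  fixes C u w :: "'i \<Rightarrow> real"
  assumes "finite I" and C: "\<And>i. i \<in> I \<Longrightarrow> C i \<ge> 0"
    and ord: "\<And>i j. i \<in> I \<Longrightarrow> j \<in> I \<Longrightarrow> (u i - u j) * (w i - w j) \<le> 0"
  shows "(\<Sum>i\<in>I. C i) * (\<Sum>i\<in>I. C i * u i * w i) \<le> (\<Sum>i\<in>I. C i * u i) * (\<Sum>i\<in>I. C i * w i)"
proof -
  have N: "(\<Sum>i\<in>I. \<Sum>j\<in>I. C i * C j * ((u i - u j) * (w i - w j))) \<le> 0"
    by (intro sum_nonpos mult_nonneg_nonpos mult_nonneg_nonneg C ord)
  have "(\<Sum>i\<in>I. \<Sum>j\<in>I. C i * C j * ((u i - u j) * (w i - w j)))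
     = (\<Sum>i\<in>I. \<Sum>j\<in>I. ((C i * u i * w i) * C j + C i * (C j * u j * w j)) - ((C i * u i) * (C j * w j) + (C i * w i) * (C j * u j)))"
    by (intro sum.cong refl) (simp add: algebra_simps)
  also have "\<dots> = (\<Sum>i\<in>I. C i * u i * w i) * (\<Sum>j\<in>I. C j) + (\<Sum>i\<in>I. C i) * (\<Sum>j\<in>I. C j * u j * w j)
        - ((\<Sum>i\<in>I. C i * u i) * (\<Sum>j\<in>I. C j * w j) + (\<Sum>i\<in>I. C i * w i) * (\<Sum>j\<in>I. C j * u j))"
    by (simp only: sum_product sum.distrib sum_subtractf)
  finally have E: "(\<Sum>i\<in>I. \<Sum>j\<in>I. C i * C j * ((u i - u j) * (w i - w j))) =
     2 * ((\<Sum>i\<in>I. C i) * (\<Sum>i\<in>I. C i * u i * w i)) - 2 * ((\<Sum>i\<in>I. C i * u i) * (\<Sum>i\<in>I. C i * w i))"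
    by (simp add: algebra_simps)
  from N E show ?thesis by linarith
qed

lemma bin1: "2 * (\<Sum>i\<le>n. real i * real (n choose i)) = real n * 2^n"
proof (cases n)
  case 0 then show ?thesis by simp
next
  case (Suc m)
  have "(\<Sum>i\<le>n. real i * real (n choose i)) = real (\<Sum>i\<le>n. i * (n choose i))" by simp
  also have "\<dots> = real n * 2^(n-1)" by (simp only: choose_linear_sum) simp
  finally show ?thesis using Suc by simp
qed

lemma bin2: "4 * (\<Sum>i\<le>n. real i ^ 2 * real (n choose i)) = real n * (real n + 1) * 2^n"
proof (cases n)
  case 0 then show ?thesis by simp
next
  case (Suc m)
  have "(\<Sum>i\<le>Suc m. real i ^ 2 * real (Suc m choose i)) = (\<Sum>i\<le>m. real (Suc i) ^ 2 * real (Suc m choose Suc i))"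
    by (subst sum.atMost_Suc_shift) (simp del: binomial_Suc_Suc)
  also have "\<dots> = (\<Sum>i\<le>m. real (Suc m) * (real i * real (m choose i) + real (m choose i)))"
  proof (rule sum.cong[OF refl])
    fix i assume "i \<in> {..m}"
    have "real (Suc i * (Suc m choose Suc i)) = real (Suc m * (m choose i))" by (simp only: Suc_times_binomial)
    then have key: "real (Suc i) * real (Suc m choose Suc i) = real (Suc m) * real (m choose i)" by (simp only: of_nat_mult)
    have "real (Suc i) ^ 2 * real (Suc m choose Suc i) = real (Suc i) * (real (Suc i) * real (Suc m choose Suc i))"
      by (simp only: power2_eq_square mult.assoc)
    also have "\<dots> = real (Suc i) * (real (Suc m) * real (m choose i))" by (simp only: key)
    finally show "real (Suc i) ^ 2 * real (Suc m choose Suc i) = real (Suc m) * (real i * real (m choose i) + real (m choose i))"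
      by (simp add: algebra_simps)
  qed
  also have "\<dots> = real (Suc m) * ((\<Sum>i\<le>m. real i * real (m choose i)) + (\<Sum>i\<le>m. real (m choose i)))"
    by (simp only: sum.distrib[symmetric] sum_distrib_left)
  also have "(\<Sum>i\<le>m. real (m choose i)) = 2^m"
    using choose_row_sum[of m] by (metis of_nat_numeral of_nat_power of_nat_sum)
  finally have "4 * (\<Sum>i\<le>Suc m. real i ^ 2 * real (Suc m choose i)) = real (Suc m) * (2 * (2 * (\<Sum>i\<le>m. real i * real (m choose i))) + 4 * 2^m)"
    by (simp add: algebra_simps)
  also have "\<dots> = real (Suc m) * (2 * (real m * 2^m) + 4 * 2^m)" by (simp only: bin1)
  finally show ?thesis using Suc by (simp add: algebra_simps)
qed

lemma bin3: "(\<Sum>i\<le>m. real (m choose i) * ((real m - 2 * real i)^2 - real m)) = 0"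
proof -
  have "(\<Sum>i\<le>m. real (m choose i) * ((real m - 2 * real i)^2 - real m))
      = (real m ^2 - real m) * (\<Sum>i\<le>m. real (m choose i)) - 2 * real m * (2 * (\<Sum>i\<le>m. real i * real (m choose i)))
        + 4 * (\<Sum>i\<le>m. real i ^ 2 * real (m choose i))"
    by (simp add: power2_eq_square algebra_simps sum_distrib_left sum_subtractf sum.distrib)
  also have "(\<Sum>i\<le>m. real (m choose i)) = 2^m"
    using choose_row_sum[of m] by (metis of_nat_numeral of_nat_power of_nat_sum)
  finally show ?thesis by (simp only: bin1 bin2) (simp add: algebra_simps power2_eq_square)
qed


lemma Gamma_ratio_exp:
  fixes \<alpha> t :: real assumes "\<alpha> \<ge> 1" "t \<ge> 0"
  shows "Gamma (t+1) / Gamma (\<alpha>*t+1) = exp (ln_Gamma (t+1) - ln_Gamma (\<alpha>*t+1))"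
proof -
  have "\<alpha>*t \<ge> 0" using assms by simp
  then have "\<alpha>*t+1 > 0" by linarith
  then show ?thesis using assms by (simp add: Gamma_real_pos_exp exp_diff)
qed

lemma coeff_le:
  fixes \<alpha> :: real assumes a: "\<alpha> \<ge> 1"
  shows "(\<Sum>i\<le>m. inverse (Gamma (\<alpha>*real i+1)) * inverse (Gamma (\<alpha>*real (m-i)+1)) * ((real m - 2*real i)^2 - real m)) \<le> 0"
proof -
  define \<phi> where "\<phi> = (\<lambda>t. ln_Gamma (t+1) - ln_Gamma (\<alpha>*t+1))"
  have conc: "concave_on {0..} \<phi>" unfolding \<phi>_def by (rule phi_concave[OF a])
  define C where "C = (\<lambda>i. real (m choose i))"
  define u where "u = (\<lambda>i. (real m - 2*real i)^2 - real m)"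
  define w where "w = (\<lambda>i. exp (\<phi> (real i) + \<phi> (real (m-i))))"
  have inv: "inverse (Gamma (\<alpha>*real i+1)) = exp (\<phi> (real i)) / fact i" for i
  proof -
    have "Gamma (real i + 1) = fact i" using Gamma_fact[of i] by (simp add: add.commute)
    moreover have "\<alpha>*real i+1 > 0" using a by (smt (verit) mult_nonneg_nonneg of_nat_0_le_iff)
    moreover have "Gamma (real i+1) / Gamma (\<alpha>*real i+1) = exp (\<phi> (real i))"
      unfolding \<phi>_def by (rule Gamma_ratio_exp[OF a]) simp
    ultimately show ?thesis by (simp add: field_simps)
  qed
  have trm: "inverse (Gamma (\<alpha>*real i+1)) * inverse (Gamma (\<alpha>*real (m-i)+1)) * ((real m - 2*real i)^2 - real m)
     = (C i * u i * w i) / fact m" if "i \<in> {..m}" for i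
  proof -
    have im: "i \<le> m" using that by simp
    have Ci: "C i = fact m / (fact i * fact (m - i))" unfolding C_def by (rule binomial_fact[OF im])
    show ?thesis unfolding inv u_def w_def Ci by (simp add: exp_add field_simps)
  qed
  have ww: "w j \<le> w i" if "i \<le> m" "j \<le> m" "\<bar>real m - 2*real i\<bar> \<le> \<bar>real m - 2*real j\<bar>" for i j
  proof -
    have "\<phi> (real j) + \<phi> (real (m-j)) \<le> \<phi> (real i) + \<phi> (real (m-i))"
      by (rule major2[OF conc]) (use that in \<open>auto simp: of_nat_diff abs_minus_commute\<close>)
    then show ?thesis unfolding w_def by simp
  qed
  have uu: "u i \<le> u j" if "\<bar>real m - 2*real i\<bar> \<le> \<bar>real m - 2*real j\<bar>" for i j
    using that unfolding u_def by (simp add: abs_le_square_iff)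
  have ord: "(u i - u j) * (w i - w j) \<le> 0" if "i \<in> {..m}" "j \<in> {..m}" for i j
  proof (cases "\<bar>real m - 2*real i\<bar> \<le> \<bar>real m - 2*real j\<bar>")
    case True
    then show ?thesis using ww[of i j] uu[of i j] that by (intro mult_nonpos_nonneg) auto
  next
    case False
    then show ?thesis using ww[of j i] uu[of j i] that by (intro mult_nonneg_nonpos) auto
  qed
  have ch: "(\<Sum>i\<le>m. C i) * (\<Sum>i\<le>m. C i * u i * w i) \<le> (\<Sum>i\<le>m. C i * u i) * (\<Sum>i\<le>m. C i * w i)"
    by (rule cheb) (auto simp: C_def intro: ord)
  have "(\<Sum>i\<le>m. C i * u i) = 0" unfolding C_def u_def by (rule bin3)
  moreover have "(\<Sum>i\<le>m. C i) > 0" unfolding C_def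
    using choose_row_sum[of m] by (metis of_nat_numeral of_nat_power of_nat_sum zero_less_numeral zero_less_power)
  ultimately have "(\<Sum>i\<le>m. C i * u i * w i) \<le> 0" using ch by (simp add: mult_le_0_iff)
  then have "(\<Sum>i\<le>m. C i * u i * w i) / fact m \<le> 0" by (simp add: divide_nonpos_pos)
  moreover have "(\<Sum>i\<le>m. C i * u i * w i) / fact m = (\<Sum>i\<le>m. inverse (Gamma (\<alpha>*real i+1)) * inverse (Gamma (\<alpha>*real (m-i)+1)) * ((real m - 2*real i)^2 - real m))"
    unfolding sum_divide_distrib by (rule sum.cong[OF refl], rule trm[symmetric])
  ultimately show ?thesis by simp
qed


lemma Gamma_lower: "\<exists>c::real>0. \<forall>y\<ge>(0::real). Gamma (y+1) \<ge> c * fact (nat \<lfloor>y\<rfloor>)"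
proof -
  have np: "x \<notin> \<int>\<^sub>\<le>\<^sub>0" if "x > 0" for x :: real using that by (auto elim!: nonpos_Ints_cases)
  have "continuous_on {1..2::real} Gamma"
    by (rule continuous_on_Gamma) (auto elim!: nonpos_Ints_cases)
  then obtain x0 :: real where x0: "x0 \<in> {1..2}" "\<And>y. y \<in> {1..2} \<Longrightarrow> Gamma x0 \<le> Gamma y"
    using continuous_attains_inf[of "{1..2::real}" Gamma] by auto
  have c: "Gamma x0 > 0" using x0 by auto
  have "Gamma (y+1) \<ge> Gamma x0 * fact (nat \<lfloor>y\<rfloor>)" if y: "y \<ge> 0" for y :: real
  proof -
    define n where "n = nat \<lfloor>y\<rfloor>"
    define \<theta> where "\<theta> = y - real n"
    have th: "0 \<le> \<theta>" "\<theta> < 1" using y unfolding \<theta>_def n_def by linarith+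
    have "pochhammer (\<theta>+1) n = Gamma (\<theta>+1 + real n) / Gamma (\<theta>+1)"
      by (rule pochhammer_Gamma, rule np) (use th in simp)
    moreover have "\<theta>+1 + real n = y + 1" unfolding \<theta>_def by simp
    moreover have "Gamma (\<theta>+1) > 0" using th by simp
    ultimately have G: "Gamma (y+1) = pochhammer (\<theta>+1) n * Gamma (\<theta>+1)" by simp
    have "fact n = pochhammer (1::real) n" by (simp add: pochhammer_fact)
    also have "\<dots> \<le> pochhammer (\<theta>+1) n" unfolding pochhammer_prod
      by (rule prod_mono) (use th in auto)
    finally have f: "fact n \<le> pochhammer (\<theta>+1) n" .
    have g: "Gamma x0 \<le> Gamma (\<theta>+1)" using x0(2)[of "\<theta>+1"] th by simp
    have "Gamma x0 * fact n \<le> Gamma (\<theta>+1) * pochhammer (\<theta>+1) n"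
      by (rule mult_mono[OF g f]) (use c th in auto)
    then show ?thesis using G unfolding n_def by (simp add: mult.commute)
  qed
  with c show ?thesis by blast
qed

lemma fact_lower: fixes Q :: real shows "\<exists>D>0. \<forall>n. Q^n / fact n \<le> D"
proof -
  have "summable (\<lambda>n. inverse (fact n) * Q^n)" by (rule summable_exp)
  then have "(\<lambda>n. inverse (fact n) * Q^n) \<longlonglongrightarrow> 0" by (rule summable_LIMSEQ_zero)
  then have "convergent (\<lambda>n. inverse (fact n) * Q^n)" by (rule convergentI)
  then have "Bseq (\<lambda>n. inverse (fact n) * Q^n)" by (rule convergent_imp_Bseq)
  from BseqD[OF this] obtain K where K: "K > 0" "\<forall>n. norm (inverse (fact n) * Q^n) \<le> K" by blast
  have "Q^n / fact n \<le> K" for n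
  proof -
    have "Q^n / fact n = inverse (fact n) * Q^n" by (simp add: divide_inverse mult.commute)
    also have "\<dots> \<le> norm (inverse (fact n) * Q^n)" unfolding real_norm_def by (rule abs_ge_self)
    also have "\<dots> \<le> K" using K(2) by blast
    finally show ?thesis .
  qed
  with K show ?thesis by blast
qed

lemma mlf_bound:
  fixes \<alpha>0 x :: real assumes a0: "\<alpha>0 > 0"
  shows "\<exists>B. \<forall>\<alpha>\<ge>\<alpha>0. \<forall>k. \<bar>x\<bar>^k / Gamma (\<alpha> * real k + 1) \<le> B * (1/2)^k"
proof -
  obtain c :: real where c: "c > 0" "\<And>y. y \<ge> 0 \<Longrightarrow> Gamma (y+1) \<ge> c * fact (nat \<lfloor>y\<rfloor>)"
    using Gamma_lower by blast
  define R where "R = max 1 \<bar>x\<bar>"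
  have R: "R \<ge> 1" "\<bar>x\<bar> \<le> R" unfolding R_def by auto
  define Q where "Q = (2*R) powr (1/\<alpha>0)"
  have Q: "Q \<ge> 1" unfolding Q_def using R a0 by (intro ge_one_powr_ge_zero) auto
  obtain D where D: "D > 0" "\<And>n. Q^n / fact n \<le> D" using fact_lower by blast
  have "\<bar>x\<bar>^k / Gamma (\<alpha> * real k + 1) \<le> (Q*D/c) * (1/2)^k" if a: "\<alpha> \<ge> \<alpha>0" for \<alpha> k
  proof -
    define n where "n = nat \<lfloor>\<alpha> * real k\<rfloor>"
    have ak: "\<alpha> * real k \<ge> 0" using a a0 by simp
    have nge: "real n \<ge> \<alpha>0 * real k - 1"
    proof -
      have "\<alpha>0 * real k \<le> \<alpha> * real k" using a by (simp add: mult_right_mono)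
      moreover have "real n > \<alpha> * real k - 1" unfolding n_def using ak by linarith
      ultimately show ?thesis by linarith
    qed
    have "Q powr (\<alpha>0 * real k - 1) \<le> Q powr (real n)" by (rule powr_mono[OF nge Q])
    also have "Q powr (real n) = Q^n" using Q by (simp add: powr_realpow)
    also have "Q powr (\<alpha>0 * real k - 1) = (2*R)^k / Q"
    proof -
      have "Q powr (\<alpha>0 * real k - 1) = Q powr (\<alpha>0 * real k) / Q" using Q by (simp add: powr_diff)
      also have "Q powr (\<alpha>0 * real k) = (2*R) powr (real k)" unfolding Q_def powr_powr using a0 by simp
      also have "\<dots> = (2*R)^k" using R by (simp add: powr_realpow)
      finally show ?thesis .
    qed
    finally have "(2*R)^k / Q \<le> Q^n" .
    also have "Q^n \<le> D * fact n" using D(2)[of n] by (simp add: divide_le_eq)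
    finally have "(2*R)^k / Q \<le> D * fact n" .
    then have "(2*R)^k \<le> D * fact n * Q" using Q by (simp add: divide_le_eq)
    then have "(2*R)^k \<le> Q * D * fact n" by (simp only: mult_ac)
    have cf: "c * fact n \<le> Gamma (\<alpha> * real k + 1)" using c(2)[OF ak] unfolding n_def .
    have Gp: "Gamma (\<alpha> * real k + 1) > 0" using ak by simp
    have QD: "Q * D > 0" using Q D by simp
    have "c * (2*R)^k \<le> c * (Q * D * fact n)" by (rule mult_left_mono) (use c \<open>(2*R)^k \<le> Q * D * fact n\<close> in linarith)+
    also have "\<dots> = Q * D * (c * fact n)" by simp
    also have "\<dots> \<le> Q * D * Gamma (\<alpha> * real k + 1)" by (rule mult_left_mono[OF cf]) (use QD in simp)
    finally have A0: "c * (2*R)^k \<le> Q * D * Gamma (\<alpha> * real k + 1)" .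
    have eq: "c * (2*R)^k = R^k * (c * 2^k)" by (simp only: power_mult_distrib mult_ac)
    from A0 have A: "R^k * (c * 2^k) \<le> Q * D * Gamma (\<alpha> * real k + 1)" unfolding eq .
    have xR: "\<bar>x\<bar>^k \<le> R^k" by (rule power_mono) (use R in auto)
    have "\<bar>x\<bar>^k / Gamma (\<alpha> * real k + 1) \<le> R^k / Gamma (\<alpha> * real k + 1)"
      by (rule divide_right_mono[OF xR]) (use Gp in linarith)
    also have "R^k / Gamma (\<alpha> * real k + 1) \<le> (Q * D) / (c * 2^k)"
    proof -
      have c2: "c * 2^k > 0" using c by simp
      have "R^k \<le> (Q * D) / (c * 2^k) * Gamma (\<alpha> * real k + 1)"
        using A c2 by (simp only: mult.commute[of "_ / _"] times_divide_eq_right pos_le_divide_eq) (simp only: mult.commute)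
      then show ?thesis using Gp by (simp only: pos_divide_le_eq)
    qed
    also have "(Q * D) / (c * 2^k) = (Q*D/c) * (1/2)^k" by (simp add: power_one_over)
    finally show ?thesis .
  qed
  then show ?thesis by blast
qed


lemma sum_reflect: "(\<Sum>i\<le>m. g i) = (\<Sum>i\<le>(m::nat). g (m - i))"
  by (rule sum.reindex_bij_witness[where i="\<lambda>i. m - i" and j="\<lambda>i. m - i"]) auto

lemma sym_coeff:
  fixes a :: "nat \<Rightarrow> real"
  shows "(\<Sum>i\<le>m. a i * a (m-i) * ((real m - real i)*(real m - real i - 1)))
       - (\<Sum>i\<le>m. a i * a (m-i) * (real i * (real m - real i)))
       = (1/2) * (\<Sum>i\<le>m. a i * a (m-i) * ((real m - 2*real i)^2 - real m))"
proof -
  define h where "h i = a i * a (m-i)" for i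
  have hs: "h (m - i) = h i" if "i \<le> m" for i using that by (simp add: h_def mult.commute)
  have R: "(\<Sum>i\<le>m. h i * ((real m - real i)*(real m - real i - 1))) = (\<Sum>i\<le>m. h i * (real i * (real i - 1)))"
  proof -
    have "(\<Sum>i\<le>m. h i * ((real m - real i)*(real m - real i - 1)))
        = (\<Sum>i\<le>m. h (m-i) * ((real m - real (m-i))*(real m - real (m-i) - 1)))"
      by (rule sum_reflect)
    also have "\<dots> = (\<Sum>i\<le>m. h i * (real i * (real i - 1)))"
      by (rule sum.cong[OF refl]) (simp add: hs of_nat_diff)
    finally show ?thesis .
  qed
  have "(\<Sum>i\<le>m. h i * ((real m - real i)*(real m - real i - 1))) - (\<Sum>i\<le>m. h i * (real i * (real m - real i)))
      = (1/2) * ((\<Sum>i\<le>m. h i * ((real m - real i)*(real m - real i - 1))) + (\<Sum>i\<le>m. h i * (real i * (real i - 1))))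
        - (\<Sum>i\<le>m. h i * (real i * (real m - real i)))"
    using R by simp
  also have "\<dots> = (1/2) * (\<Sum>i\<le>m. h i * ((real m - 2*real i)^2 - real m))"
    by (simp add: sum_distrib_left sum.distrib[symmetric] sum_subtractf[symmetric] power2_eq_square algebra_simps)
  finally show ?thesis unfolding h_def .
qed


definition aML :: "real \<Rightarrow> nat \<Rightarrow> real" where "aML \<alpha> k = inverse (Gamma (\<alpha> * real k + 1))"

lemma aML_pos: "\<alpha> \<ge> 0 \<Longrightarrow> aML \<alpha> k > 0"
proof -
  assume "\<alpha> \<ge> 0" then have "\<alpha> * real k \<ge> 0" by simp
  then show ?thesis unfolding aML_def by simp
qed

lemma aML_0: "aML \<alpha> 0 = 1" by (simp add: aML_def)

lemma mlf_abs_summable: assumes "\<alpha> > 0" shows "summable (\<lambda>k. \<bar>aML \<alpha> k * y^k\<bar>)"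
proof -
  obtain B where B: "\<And>k. \<bar>y\<bar>^k / Gamma (\<alpha> * real k + 1) \<le> B * (1/2)^k"
    using mlf_bound[OF assms, of y] by blast
  show ?thesis
  proof (rule summable_comparison_test')
    show "summable (\<lambda>k. B * (1/2::real)^k)" by (intro summable_mult summable_geometric) simp
    fix k :: nat
    have "norm \<bar>aML \<alpha> k * y^k\<bar> = \<bar>y\<bar>^k / Gamma (\<alpha> * real k + 1)"
      using aML_pos[of \<alpha> k] assms by (simp add: aML_def abs_mult power_abs divide_inverse mult.commute)
    then show "norm \<bar>aML \<alpha> k * y^k\<bar> \<le> B * (1/2)^k" using B[of k] by simp
  qed
qed

lemma mlf_summable: assumes "\<alpha> > 0" shows "summable (\<lambda>k. aML \<alpha> k * y^k)"
  using summable_rabs_cancel[OF mlf_abs_summable[OF assms]] .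

lemma mlf_eq: "mittag_leffler \<alpha> x = (\<Sum>k. aML \<alpha> k * x^k)"
  unfolding mittag_leffler_def aML_def by (simp add: divide_inverse mult.commute)


lemma mlf_ge1: assumes "\<alpha> > 0" "x \<ge> 0" shows "(\<Sum>k. aML \<alpha> k * x^k) \<ge> 1"
proof -
  have nn: "0 \<le> aML \<alpha> n * x^n" for n using aML_pos[of \<alpha> n] assms by simp
  have "(\<Sum>k\<in>{0}. aML \<alpha> k * x^k) \<le> (\<Sum>k. aML \<alpha> k * x^k)"
    by (rule sum_le_suminf[OF mlf_summable[OF assms(1)]]) (use nn in auto)
  then show ?thesis by (simp add: aML_0)
qed

lemma concave_part:
  fixes \<alpha> :: real assumes a: "\<alpha> > 1"
  shows "concave_on {0<..} (\<lambda>x. ln (\<Sum>k. aML \<alpha> k * x^k))"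
proof -
  define c where "c = aML \<alpha>"
  have a0: "\<alpha> > 0" using a by simp
  have S: "\<And>y. summable (\<lambda>n. c n * y^n)" unfolding c_def by (rule mlf_summable[OF a0])
  have S1: "\<And>y. summable (\<lambda>n. diffs c n * y^n)" by (rule termdiff_converges_all[OF S])
  have S2: "\<And>y. summable (\<lambda>n. diffs (diffs c) n * y^n)" by (rule termdiff_converges_all[OF S1])
  define f where "f x = (\<Sum>n. c n * x^n)" for x :: real
  define f1 where "f1 x = (\<Sum>n. diffs c n * x^n)" for x :: real
  define f2 where "f2 x = (\<Sum>n. diffs (diffs c) n * x^n)" for x :: real
  have D1: "(f has_real_derivative f1 x) (at x)" for x
    unfolding f_def[abs_def] f1_def by (rule termdiffs_strong_converges_everywhere[OF S])
  have D2: "(f1 has_real_derivative f2 x) (at x)" for x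
    unfolding f1_def[abs_def] f2_def by (rule termdiffs_strong_converges_everywhere[OF S1])
  have cpos: "c n > 0" for n unfolding c_def using a0 by (intro aML_pos) simp
  have fpos: "f x \<ge> 1" if "x \<ge> 0" for x unfolding f_def c_def by (rule mlf_ge1[OF a0 that])
  have key: "f2 x * f x - f1 x * f1 x \<le> 0" if x: "x > 0" for x
  proof -
    define g0 where "g0 n = c n * x^n" for n
    define g1 where "g1 n = real n * c n * x^n" for n
    define g2 where "g2 n = real n * (real n - 1) * c n * x^n" for n
    have s0: "g0 sums f x" unfolding g0_def f_def using S by (simp add: summable_sums)
    have s1: "g1 sums (x * f1 x)"
    proof -
      have "(\<lambda>n. x * (diffs c n * x^n)) sums (x * f1 x)" unfolding f1_def by (intro sums_mult summable_sums S1)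
      moreover have "(\<lambda>n. x * (diffs c n * x^n)) = (\<lambda>n. g1 (Suc n))" by (rule ext) (simp add: g1_def diffs_def algebra_simps)
      ultimately have "(\<lambda>n. g1 (Suc n)) sums (x * f1 x)" by simp
      then have "g1 sums (x * f1 x + g1 0)" by (rule sums_Suc_iff[THEN iffD1])
      then show ?thesis by (simp add: g1_def)
    qed
    have s2: "g2 sums (x^2 * f2 x)"
    proof -
      have "(\<lambda>n. x^2 * (diffs (diffs c) n * x^n)) sums (x^2 * f2 x)" unfolding f2_def by (intro sums_mult summable_sums S2)
      moreover have "(\<lambda>n. x^2 * (diffs (diffs c) n * x^n)) = (\<lambda>n. g2 (Suc (Suc n)))"
        by (rule ext) (simp add: g2_def diffs_def algebra_simps power2_eq_square)
      ultimately have "(\<lambda>n. g2 (Suc (Suc n))) sums (x^2 * f2 x)" by simp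
      then have "(\<lambda>n. g2 (Suc n)) sums (x^2 * f2 x + g2 (Suc 0))" by (rule sums_Suc_iff[of "\<lambda>n. g2 (Suc n)", THEN iffD1])
      then have "(\<lambda>n. g2 (Suc n)) sums (x^2 * f2 x)" by (simp add: g2_def)
      then have "g2 sums (x^2 * f2 x + g2 0)" by (rule sums_Suc_iff[THEN iffD1])
      then show ?thesis by (simp add: g2_def)
    qed
    have nnA: "real n * (real n - 1) \<ge> 0" for n :: nat by (cases n) auto
    have nn0: "g0 n \<ge> 0" "g1 n \<ge> 0" "g2 n \<ge> 0" for n
    proof -
      have cx: "c n \<ge> 0" "x^n \<ge> 0" using cpos[of n] x by auto
      show "g0 n \<ge> 0" unfolding g0_def using cx by simp
      show "g1 n \<ge> 0" unfolding g1_def using cx by simp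
      show "g2 n \<ge> 0" unfolding g2_def by (rule mult_nonneg_nonneg[OF mult_nonneg_nonneg[OF nnA cx(1)] cx(2)])
    qed
    have ns: "summable (\<lambda>n. norm (g n))" if "g sums s" "\<And>n. g n \<ge> 0" for g :: "nat \<Rightarrow> real" and s
      using that by (simp add: sums_summable)
    have P: "(\<lambda>m. \<Sum>i\<le>m. g0 i * g2 (m - i)) sums (f x * (x^2 * f2 x))"
      using Cauchy_product_sums[OF ns[OF s0 nn0(1)] ns[OF s2 nn0(3)]] s0 s2 by (simp add: sums_iff)
    have Q: "(\<lambda>m. \<Sum>i\<le>m. g1 i * g1 (m - i)) sums ((x * f1 x) * (x * f1 x))"
      using Cauchy_product_sums[OF ns[OF s1 nn0(2)] ns[OF s1 nn0(2)]] s1 by (simp add: sums_iff)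
    have PQ: "(\<lambda>m. (\<Sum>i\<le>m. g0 i * g2 (m - i)) - (\<Sum>i\<le>m. g1 i * g1 (m - i))) sums (f x * (x^2 * f2 x) - (x * f1 x) * (x * f1 x))"
      by (rule sums_diff[OF P Q])
    have coef: "(\<Sum>i\<le>m. g0 i * g2 (m - i)) - (\<Sum>i\<le>m. g1 i * g1 (m - i)) \<le> 0" for m
    proof -
      have e0: "(\<Sum>i\<le>m. g0 i * g2 (m - i)) = x^m * (\<Sum>i\<le>m. c i * c (m-i) * ((real m - real i)*(real m - real i - 1)))"
        unfolding sum_distrib_left
      proof (rule sum.cong[OF refl])
        fix i assume "i \<in> {..m}"
        then have "x^i * x^(m-i) = x^m" by (simp add: power_add[symmetric])
        then show "g0 i * g2 (m - i) = x^m * (c i * c (m-i) * ((real m - real i)*(real m - real i - 1)))"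
          using \<open>i \<in> {..m}\<close> unfolding g0_def g2_def by (simp add: of_nat_diff algebra_simps)
      qed
      have e1: "(\<Sum>i\<le>m. g1 i * g1 (m - i)) = x^m * (\<Sum>i\<le>m. c i * c (m-i) * (real i * (real m - real i)))"
        unfolding sum_distrib_left
      proof (rule sum.cong[OF refl])
        fix i assume "i \<in> {..m}"
        then have "x^i * x^(m-i) = x^m" by (simp add: power_add[symmetric])
        then show "g1 i * g1 (m - i) = x^m * (c i * c (m-i) * (real i * (real m - real i)))"
          using \<open>i \<in> {..m}\<close> unfolding g1_def by (simp add: of_nat_diff algebra_simps)
      qed
      have "(\<Sum>i\<le>m. g0 i * g2 (m - i)) - (\<Sum>i\<le>m. g1 i * g1 (m - i))
          = x^m * ((1/2) * (\<Sum>i\<le>m. c i * c (m-i) * ((real m - 2*real i)^2 - real m)))"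
        unfolding e0 e1 right_diff_distrib[symmetric] sym_coeff ..
      also have "\<dots> \<le> 0"
      proof -
        have "(\<Sum>i\<le>m. c i * c (m-i) * ((real m - 2*real i)^2 - real m)) \<le> 0"
          using coeff_le[of \<alpha> m] a unfolding c_def aML_def by simp
        then show ?thesis using x by (simp add: mult_nonneg_nonpos)
      qed
      finally show ?thesis .
    qed
    have "f x * (x^2 * f2 x) - (x * f1 x) * (x * f1 x) \<le> 0"
      by (rule sums_le[OF coef PQ sums_zero])
    then have "x^2 * (f2 x * f x - f1 x * f1 x) \<le> 0" by (simp add: algebra_simps power2_eq_square)
    then show ?thesis using x by (simp add: mult_le_0_iff)
  qed
  show ?thesis
  proof (rule f''_le0_imp_concave[where f' = "\<lambda>x. f1 x / f x" and f'' = "\<lambda>x. (f2 x * f x - f1 x * f1 x) / (f x * f x)"])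
    show "convex {0::real<..}" by simp
    fix x :: real assume x: "x \<in> {0<..}"
    have fx: "f x > 0" using fpos[of x] x by simp
    have "((\<lambda>x. ln (f x)) has_real_derivative (1 / f x * f1 x)) (at x)"
      by (rule DERIV_chain2[OF DERIV_ln_divide[OF fx] D1])
    then show "((\<lambda>x. ln (\<Sum>k. aML \<alpha> k * x ^ k)) has_real_derivative f1 x / f x) (at x)"
      unfolding f_def c_def by simp
    show "((\<lambda>x. f1 x / f x) has_real_derivative (f2 x * f x - f1 x * f1 x) / (f x * f x)) (at x)"
      using DERIV_divide[OF D2 D1 fx[THEN less_imp_neq, symmetric]] by simp
    show "(f2 x * f x - f1 x * f1 x) / (f x * f x) \<le> 0"
      using key[of x] x fx by (simp add: divide_nonpos_pos)
  qed
qed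


lemma tri_eq:
  fixes \<beta> :: "nat \<Rightarrow> real" and y z :: real
  shows "(\<Sum>(i,j)\<in>{(i,j). i+j<N}. y^i * z^j / (fact i * fact j) * \<beta> (i+j)) = (\<Sum>n<N. \<beta> n * (y+z)^n / fact n)"
proof -
  have "(\<Sum>(i,j)\<in>{(i,j). i+j<N}. y^i * z^j / (fact i * fact j) * \<beta> (i+j))
      = (\<Sum>n<N. \<Sum>i\<le>n. y^i * z^(n-i) / (fact i * fact (n-i)) * \<beta> (i+(n-i)))"
    by (rule sum.triangle_reindex)
  also have "\<dots> = (\<Sum>n<N. \<beta> n * (y+z)^n / fact n)"
  proof (rule sum.cong[OF refl])
    fix n assume "n \<in> {..<N}"
    have "(\<Sum>i\<le>n. y^i * z^(n-i) / (fact i * fact (n-i)) * \<beta> (i+(n-i)))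
        = (\<Sum>i\<le>n. (\<beta> n / fact n) * (of_nat (n choose i) * y^i * z^(n-i)))"
    proof (rule sum.cong[OF refl])
      fix i assume "i \<in> {..n}"
      then have i: "i \<le> n" by simp
      have "real (n choose i) = fact n / (fact i * fact (n-i))" by (rule binomial_fact[OF i])
      then show "y^i * z^(n-i) / (fact i * fact (n-i)) * \<beta> (i+(n-i)) = (\<beta> n / fact n) * (of_nat (n choose i) * y^i * z^(n-i))"
        using i by (simp add: field_simps)
    qed
    also have "\<dots> = (\<beta> n / fact n) * (y+z)^n"
      by (simp add: binomial_ring sum_distrib_left)
    finally show "(\<Sum>i\<le>n. y^i * z^(n-i) / (fact i * fact (n-i)) * \<beta> (i+(n-i))) = \<beta> n * (y+z)^n / fact n"
      by simp
  qed
  finally show ?thesis .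
qed

lemma dsum_lim:
  fixes \<beta> :: "nat \<Rightarrow> real" and y z :: real
  assumes S: "summable (\<lambda>n. \<bar>\<beta> n\<bar> * (\<bar>y\<bar> + \<bar>z\<bar>)^n / fact n)"
  shows "(\<lambda>N. \<Sum>i<N. \<Sum>j<N. y^i * z^j / (fact i * fact j) * \<beta> (i+j)) \<longlonglongrightarrow> (\<Sum>n. \<beta> n * (y+z)^n / fact n)"
proof -
  define a where "a i j = y^i * z^j / (fact i * fact j) * \<beta> (i+j)" for i j
  define tri where "tri N = {(i,j). i+j<N}" for N :: nat
  define A where "A N = (\<Sum>n<N. \<bar>\<beta> n\<bar> * (\<bar>y\<bar> + \<bar>z\<bar>)^n / fact n)" for N
  have sqsum: "(\<Sum>i<N. \<Sum>j<N. a i j) = (\<Sum>(i,j)\<in>{..<N}\<times>{..<N}. a i j)" for N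
    by (rule sum.cartesian_product)
  have trisub: "tri N \<subseteq> {..<N}\<times>{..<N}" for N unfolding tri_def by auto
  have sqsub: "{..<N}\<times>{..<N} \<subseteq> tri (2*N)" for N unfolding tri_def by auto
  have fintri: "finite (tri N)" for N using trisub[of N] by (rule finite_subset) simp
  have T: "(\<Sum>(i,j)\<in>tri N. a i j) = (\<Sum>n<N. \<beta> n * (y+z)^n / fact n)" for N
    unfolding a_def tri_def by (rule tri_eq)
  have TA: "(\<Sum>(i,j)\<in>tri N. \<bar>a i j\<bar>) = A N" for N
  proof -
    have "(\<Sum>(i,j)\<in>tri N. \<bar>a i j\<bar>) = (\<Sum>(i,j)\<in>tri N. \<bar>y\<bar>^i * \<bar>z\<bar>^j / (fact i * fact j) * \<bar>\<beta> (i+j)\<bar>)"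
      by (rule sum.cong[OF refl]) (auto simp: a_def abs_mult power_abs)
    also have "\<dots> = A N" unfolding A_def tri_def by (rule tri_eq)
    finally show ?thesis .
  qed
  have S': "summable (\<lambda>n. \<beta> n * (y+z)^n / fact n)"
  proof (rule summable_comparison_test'[OF S])
    fix n :: nat
    have "\<bar>y+z\<bar>^n \<le> (\<bar>y\<bar>+\<bar>z\<bar>)^n" by (rule power_mono) auto
    then have "\<bar>\<beta> n\<bar> * \<bar>y+z\<bar>^n \<le> \<bar>\<beta> n\<bar> * (\<bar>y\<bar>+\<bar>z\<bar>)^n" by (rule mult_left_mono) simp
    then show "norm (\<beta> n * (y+z)^n / fact n) \<le> \<bar>\<beta> n\<bar> * (\<bar>y\<bar> + \<bar>z\<bar>)^n / fact n"
      by (simp add: abs_mult power_abs divide_right_mono)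
  qed
  have Tlim: "(\<lambda>N. \<Sum>(i,j)\<in>tri N. a i j) \<longlonglongrightarrow> (\<Sum>n. \<beta> n * (y+z)^n / fact n)"
    unfolding T by (rule summable_LIMSEQ[OF S'])
  have Alim: "A \<longlonglongrightarrow> (\<Sum>n. \<bar>\<beta> n\<bar> * (\<bar>y\<bar> + \<bar>z\<bar>)^n / fact n)"
    unfolding A_def[abs_def] by (rule summable_LIMSEQ[OF S])
  have "strict_mono (\<lambda>N::nat. 2*N)" by (rule strict_monoI) simp
  from LIMSEQ_subseq_LIMSEQ[OF Alim this]
  have A2lim: "(\<lambda>N. A (2*N)) \<longlonglongrightarrow> (\<Sum>n. \<bar>\<beta> n\<bar> * (\<bar>y\<bar> + \<bar>z\<bar>)^n / fact n)" by (simp add: o_def)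
  have Dlim: "(\<lambda>N. A (2*N) - A N) \<longlonglongrightarrow> 0"
    using tendsto_diff[OF A2lim Alim] by simp
  have bound: "norm ((\<Sum>i<N. \<Sum>j<N. a i j) - (\<Sum>(i,j)\<in>tri N. a i j)) \<le> A (2*N) - A N" for N
  proof -
    have "(\<Sum>i<N. \<Sum>j<N. a i j) - (\<Sum>(i,j)\<in>tri N. a i j) = (\<Sum>(i,j)\<in>{..<N}\<times>{..<N} - tri N. a i j)"
      unfolding sqsum by (rule sum_diff[symmetric]) (use trisub in auto)
    then have "norm ((\<Sum>i<N. \<Sum>j<N. a i j) - (\<Sum>(i,j)\<in>tri N. a i j)) \<le> (\<Sum>(i,j)\<in>{..<N}\<times>{..<N} - tri N. \<bar>a i j\<bar>)"
      by (simp add: case_prod_unfold sum_abs)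
    also have "\<dots> \<le> (\<Sum>(i,j)\<in>tri (2*N) - tri N. \<bar>a i j\<bar>)"
      by (rule sum_mono2) (use sqsub fintri in auto)
    also have "\<dots> = (\<Sum>(i,j)\<in>tri (2*N). \<bar>a i j\<bar>) - (\<Sum>(i,j)\<in>tri N. \<bar>a i j\<bar>)"
    proof (rule sum_diff[OF fintri])
      show "tri N \<subseteq> tri (2*N)" unfolding tri_def by auto
    qed
    also have "\<dots> = A (2*N) - A N" by (simp only: TA)
    finally show ?thesis .
  qed
  have "(\<lambda>N. (\<Sum>i<N. \<Sum>j<N. a i j) - (\<Sum>(i,j)\<in>tri N. a i j)) \<longlonglongrightarrow> 0"
    by (rule Lim_null_comparison[OF _ Dlim]) (use bound in simp)
  from tendsto_add[OF this Tlim]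
  show ?thesis unfolding a_def by simp
qed


definition PSD :: "(nat \<Rightarrow> real) \<Rightarrow> bool" where
  "PSD b \<longleftrightarrow> (\<forall>N (v::nat\<Rightarrow>real) l m. 0 \<le> (\<Sum>i<N. \<Sum>j<N. v i * v j * (l^2 * b (i+j) + 2*l*m * b (i+j+1) + m^2 * b (i+j+2))))"

lemma PSD_D: "PSD b \<Longrightarrow> 0 \<le> (\<Sum>i<N. \<Sum>j<N. v i * v j * (l^2 * b (i+j) + 2*l*m * b (i+j+1) + m^2 * b (i+j+2)))"
  unfolding PSD_def by blast

lemma sum_prod_K: "(\<Sum>i\<in>A. \<Sum>j\<in>B. f i * g j * (K::real)) = sum f A * sum g B * K"
  by (simp add: sum_distrib_left sum_distrib_right mult_ac) (rule sum.swap)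

lemma PSD_one: "PSD (\<lambda>n. 1)"
  unfolding PSD_def
proof (intro allI)
  fix N and v :: "nat \<Rightarrow> real" and l m :: real
  have e: "(\<Sum>i<N. \<Sum>j<N. v i * v j * (l^2 * 1 + 2*l*m * 1 + m^2 * 1)) = ((\<Sum>i<N. v i) * (\<Sum>j<N. v j)) * (l^2 * 1 + 2*l*m * 1 + m^2 * 1)"
    by (rule sum_prod_K)
  have k: "(l^2 * 1 + 2*l*m * 1 + m^2 * 1) = (l+m)^2" by (simp add: power2_eq_square algebra_simps)
  have "((\<Sum>i<N. v i) * (\<Sum>j<N. v j)) * (l^2 * 1 + 2*l*m * 1 + m^2 * 1) \<ge> 0" unfolding k by simp
  then show "0 \<le> (\<Sum>i<N. \<Sum>j<N. v i * v j * (l^2 * 1 + 2*l*m * 1 + m^2 * 1))" unfolding e .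
qed

lemma PSD_scale: assumes "PSD b" "K \<ge> 0" shows "PSD (\<lambda>n. K * b n)"
  unfolding PSD_def
proof (intro allI)
  fix N and v :: "nat \<Rightarrow> real" and l m :: real
  have "(\<Sum>i<N. \<Sum>j<N. v i * v j * (l^2 * (K * b (i+j)) + 2*l*m * (K * b (i+j+1)) + m^2 * (K * b (i+j+2))))
      = K * (\<Sum>i<N. \<Sum>j<N. v i * v j * (l^2 * b (i+j) + 2*l*m * b (i+j+1) + m^2 * b (i+j+2)))"
    by (simp add: sum_distrib_left algebra_simps)
  also have "\<dots> \<ge> 0" using PSD_D[OF assms(1)] assms(2) by simp
  finally show "0 \<le> (\<Sum>i<N. \<Sum>j<N. v i * v j * (l^2 * (K * b (i+j)) + 2*l*m * (K * b (i+j+1)) + m^2 * (K * b (i+j+2))))" .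
qed

lemma PSD_geom: assumes "PSD b" shows "PSD (\<lambda>n. C^n * b n)"
  unfolding PSD_def
proof (intro allI)
  fix N and v :: "nat \<Rightarrow> real" and l m :: real
  have "(\<Sum>i<N. \<Sum>j<N. v i * v j * (l^2 * (C^(i+j) * b (i+j)) + 2*l*m * (C^(i+j+1) * b (i+j+1)) + m^2 * (C^(i+j+2) * b (i+j+2))))
      = (\<Sum>i<N. \<Sum>j<N. (v i * C^i) * (v j * C^j) * (l^2 * b (i+j) + 2*l*(m*C) * b (i+j+1) + (m*C)^2 * b (i+j+2)))"
    by (intro sum.cong refl) (simp add: power_add power2_eq_square algebra_simps)
  also have "\<dots> \<ge> 0" by (rule PSD_D[OF assms])
  finally show "0 \<le> (\<Sum>i<N. \<Sum>j<N. v i * v j * (l^2 * (C^(i+j) * b (i+j)) + 2*l*m * (C^(i+j+1) * b (i+j+1)) + m^2 * (C^(i+j+2) * b (i+j+2))))" .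
qed

lemma PSD_int:
  fixes \<phi> w :: "real \<Rightarrow> real" and S :: "real set"
  assumes P: "PSD b" and I: "\<And>n. ((\<lambda>t. \<phi> t ^ n * w t) has_integral u n) S"
    and w: "\<And>t. t \<in> S \<Longrightarrow> w t \<ge> 0"
  shows "PSD (\<lambda>n. b n * u n)"
  unfolding PSD_def
proof (intro allI)
  fix N and v :: "nat \<Rightarrow> real" and l m :: real
  define G where "G t = (\<Sum>i<N. \<Sum>j<N. v i * v j * (l^2 * b (i+j) * (\<phi> t ^ (i+j) * w t)
      + 2*l*m * b (i+j+1) * (\<phi> t ^ (i+j+1) * w t) + m^2 * b (i+j+2) * (\<phi> t ^ (i+j+2) * w t)))" for t
  have "(G has_integral (\<Sum>i<N. \<Sum>j<N. v i * v j * (l^2 * b (i+j) * u (i+j)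
      + 2*l*m * b (i+j+1) * u (i+j+1) + m^2 * b (i+j+2) * u (i+j+2)))) S"
    unfolding G_def by (intro has_integral_sum has_integral_mult_right has_integral_add I) auto
  moreover have "G t \<ge> 0" if t: "t \<in> S" for t
  proof -
    have "G t = w t * (\<Sum>i<N. \<Sum>j<N. (v i * \<phi> t ^ i) * (v j * \<phi> t ^ j) * (l^2 * b (i+j) + 2*l*(m * \<phi> t) * b (i+j+1) + (m * \<phi> t)^2 * b (i+j+2)))"
      unfolding G_def sum_distrib_left
      by (intro sum.cong refl) (simp add: power_add power2_eq_square algebra_simps)
    also have "\<dots> \<ge> 0" using w[OF t] PSD_D[OF P] by simp
    finally show ?thesis .
  qed
  ultimately have "0 \<le> (\<Sum>i<N. \<Sum>j<N. v i * v j * (l^2 * b (i+j) * u (i+j)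
      + 2*l*m * b (i+j+1) * u (i+j+1) + m^2 * b (i+j+2) * u (i+j+2)))"
    by (rule has_integral_nonneg)
  then show "0 \<le> (\<Sum>i<N. \<Sum>j<N. v i * v j * (l^2 * (b (i+j) * u (i+j)) + 2*l*m * (b (i+j+1) * u (i+j+1)) + m^2 * (b (i+j+2) * u (i+j+2))))"
    by (simp add: mult.assoc)
qed

lemma PSD_prod:
  fixes M :: nat and F :: "nat \<Rightarrow> nat \<Rightarrow> real"
  assumes "\<And>j. j < M \<Longrightarrow> \<exists>\<phi> w (S::real set). (\<forall>t\<in>S. w t \<ge> 0) \<and> (\<forall>n. ((\<lambda>t. \<phi> t ^ n * w t) has_integral F j n) S)"
  shows "PSD (\<lambda>n. \<Prod>j<M. F j n)"
  using assms
proof (induction M)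
  case 0
  then show ?case using PSD_one by simp
next
  case (Suc M)
  have P: "PSD (\<lambda>n. \<Prod>j<M. F j n)" using Suc by simp
  obtain \<phi> w S where ws: "\<forall>t\<in>(S::real set). w t \<ge> 0" "\<forall>n. ((\<lambda>t. \<phi> t ^ n * w t) has_integral F M n) S"
    using Suc.prems[of M] by blast
  have "PSD (\<lambda>n. (\<Prod>j<M. F j n) * F M n)" by (rule PSD_int[OF P]) (use ws in auto)
  then show ?case by (simp add: mult.commute)
qed


lemma quad:
  fixes A B C :: real
  assumes q: "\<And>l m. 0 \<le> l^2 * A + 2*l*m * B + m^2 * C"
  shows "B^2 \<le> A * C" and "A \<ge> 0" and "C \<ge> 0"
proof -
  show A: "A \<ge> 0" using q[of 1 0] by simp
  show C: "C \<ge> 0" using q[of 0 1] by simp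
  show "B^2 \<le> A * C"
  proof (cases "A = 0")
    case False
    then have Ap: "A > 0" using A by simp
    have "0 \<le> B^2 * A + 2*B*(-A) * B + (-A)^2 * C" using q[of B "-A"] .
    then have "0 \<le> A * (A * C - B^2)" by (simp add: power2_eq_square algebra_simps)
    then show ?thesis using Ap by (simp add: zero_le_mult_iff)
  next
    case True
    define t where "t = 1 / (C + 1)"
    have t: "t > 0" "t * C < 1" using C by (auto simp: t_def field_simps)
    have "0 \<le> 1^2 * A + 2*1*(-B*t) * B + (-B*t)^2 * C" using q[of 1 "-B*t"] .
    then have "0 \<le> B^2 * t * (t * C - 2)" using True by (simp add: power2_eq_square algebra_simps)
    moreover have "t * (t * C - 2) < 0" using t by (simp add: mult_pos_neg)
    ultimately have "B^2 \<le> 0" by (smt (verit) mult.assoc mult_le_0_iff zero_le_power2)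
    then show ?thesis using True by simp
  qed
qed

definition Qs :: "(nat \<Rightarrow> real) \<Rightarrow> nat \<Rightarrow> (nat \<Rightarrow> real) \<Rightarrow> (nat \<Rightarrow> real) \<Rightarrow> nat \<Rightarrow> real" where
  "Qs b N p q e = (\<Sum>i<N. \<Sum>j<N. p i * q j * b (i+j+e))"

lemma Qs_expand1:
  "(\<Sum>i<N. \<Sum>j<N. (l * p i + m * q i) * (l * p j + m * q j) * (1^2 * b (i+j) + 2*1*0 * b (i+j+1) + 0^2 * b (i+j+2)))
   = l^2 * Qs b N p p 0 + l*m * Qs b N p q 0 + l*m * Qs b N q p 0 + m^2 * Qs b N q q 0"
  unfolding Qs_def by (simp add: sum.distrib sum_distrib_left power2_eq_square algebra_simps)

lemma Qs_expand2:
  "(\<Sum>i<N. \<Sum>j<N. p i * p j * (l^2 * b (i+j) + 2*l*m * b (i+j+1) + m^2 * b (i+j+2)))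
   = l^2 * Qs b N p p 0 + 2*l*m * Qs b N p p 1 + m^2 * Qs b N p p 2"
  unfolding Qs_def by (simp add: sum.distrib sum_distrib_left power2_eq_square algebra_simps)

lemma Qs_lim:
  fixes b :: "nat \<Rightarrow> real"
  assumes S: "summable (\<lambda>n. \<bar>b (n+e)\<bar> * (\<bar>y\<bar> + \<bar>z\<bar>)^n / fact n)"
  shows "(\<lambda>N. Qs b N (\<lambda>i. y^i / fact i) (\<lambda>j. z^j / fact j) e) \<longlonglongrightarrow> (\<Sum>n. b (n+e) * (y+z)^n / fact n)"
proof -
  have "Qs b N (\<lambda>i. y^i / fact i) (\<lambda>j. z^j / fact j) e = (\<Sum>i<N. \<Sum>j<N. y^i * z^j / (fact i * fact j) * b (i+j+e))" for N
    unfolding Qs_def by (intro sum.cong refl) simp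
  then show ?thesis using dsum_lim[of "\<lambda>n. b (n+e)" y z] S by simp
qed


lemma PSD_logconvex:
  fixes b :: "nat \<Rightarrow> real"
  assumes P: "PSD b" and bnn: "\<And>n. b n \<ge> 0" and b0: "b 0 > 0"
    and S: "\<And>y. summable (\<lambda>n. b n / fact n * y^n)"
  shows "(\<forall>x. (\<Sum>n. b n / fact n * x^n) > 0) \<and> convex_on UNIV (\<lambda>x. ln (\<Sum>n. b n / fact n * x^n))"
proof -
  define c where "c n = b n / fact n" for n
  have Sc: "\<And>y. summable (\<lambda>n. c n * y^n)" unfolding c_def by (rule S)
  have S1: "\<And>y. summable (\<lambda>n. diffs c n * y^n)" by (rule termdiff_converges_all[OF Sc])
  have S2: "\<And>y. summable (\<lambda>n. diffs (diffs c) n * y^n)" by (rule termdiff_converges_all[OF S1])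
  have dc: "x * (y / (x * z)) = y / z" if "x > 0" "z > 0" for x y z :: real using that by (simp add: field_simps)
  have d1: "diffs c n = b (n+1) / fact n" for n
  proof -
    have "diffs c n = of_nat (Suc n) * (b (Suc n) / (of_nat (Suc n) * fact n))"
      unfolding diffs_def c_def fact_Suc by simp
    also have "\<dots> = b (Suc n) / fact n" by (rule dc) auto
    finally show ?thesis by simp
  qed
  have d2: "diffs (diffs c) n = b (n+2) / fact n" for n
  proof -
    have "diffs (diffs c) n = of_nat (Suc n) * (b (Suc n + 1) / (of_nat (Suc n) * fact n))"
      unfolding diffs_def[of "diffs c"] d1 fact_Suc by simp
    also have "\<dots> = b (Suc n + 1) / fact n" by (rule dc) auto
    finally show ?thesis by (simp add: numeral_2_eq_2)
  qed
  define fe where "fe e x = (\<Sum>n. b (n+e) * x^n / fact n)" for e :: nat and x :: real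
  have SE: "summable (\<lambda>n. \<bar>b (n+e)\<bar> * r^n / fact n)" if "e \<le> 2" for e r
  proof -
    have "e = 0 \<or> e = 1 \<or> e = 2" using that by auto
    moreover have "summable (\<lambda>n. \<bar>b (n+0)\<bar> * r^n / fact n)" using Sc[of r] bnn unfolding c_def by (simp add: mult.commute)
    moreover have "summable (\<lambda>n. \<bar>b (n+1)\<bar> * r^n / fact n)" using S1[of r] bnn unfolding d1 by (simp add: mult.commute)
    moreover have "summable (\<lambda>n. \<bar>b (n+2)\<bar> * r^n / fact n)" using S2[of r] bnn unfolding d2 by (simp add: mult.commute)
    ultimately show ?thesis by auto
  qed
  define f where "f x = (\<Sum>n. c n * x^n)" for x :: real
  define f1 where "f1 x = (\<Sum>n. diffs c n * x^n)" for x :: real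
  define f2 where "f2 x = (\<Sum>n. diffs (diffs c) n * x^n)" for x :: real
  have ff: "f x = fe 0 x" "f1 x = fe 1 x" "f2 x = fe 2 x" for x
    unfolding f_def f1_def f2_def fe_def d1 d2 c_def by (simp_all add: mult.commute)
  define pv where "pv y i = y^i / fact i" for y :: real and i :: nat
  have Qlim: "(\<lambda>N. Qs b N (pv y) (pv z) e) \<longlonglongrightarrow> fe e (y+z)" if "e \<le> 2" for y z e
    unfolding pv_def fe_def by (rule Qs_lim[OF SE[OF that]])
  have f0: "f 0 = b 0" unfolding f_def using powser_zero[of c] by (simp add: c_def)
  have mix: "0 \<le> l^2 * fe 0 (y+y) + 2*l*m * fe 0 (y+z) + m^2 * fe 0 (z+z)" for y z l m
  proof -
    have lim: "(\<lambda>N. l^2 * Qs b N (pv y) (pv y) 0 + l*m * Qs b N (pv y) (pv z) 0 + l*m * Qs b N (pv z) (pv y) 0 + m^2 * Qs b N (pv z) (pv z) 0)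
        \<longlonglongrightarrow> l^2 * fe 0 (y+y) + l*m * fe 0 (y+z) + l*m * fe 0 (z+y) + m^2 * fe 0 (z+z)"
      by (intro tendsto_intros Qlim) auto
    have "\<forall>N. 0 \<le> l^2 * Qs b N (pv y) (pv y) 0 + l*m * Qs b N (pv y) (pv z) 0 + l*m * Qs b N (pv z) (pv y) 0 + m^2 * Qs b N (pv z) (pv z) 0"
      using PSD_D[OF P, where v="\<lambda>i. l * pv y i + m * pv z i" and l=1 and m=0] unfolding Qs_expand1 by blast
    then have "0 \<le> l^2 * fe 0 (y+y) + l*m * fe 0 (y+z) + l*m * fe 0 (z+y) + m^2 * fe 0 (z+z)"
      by (intro LIMSEQ_le_const[OF lim]) auto
    then show ?thesis by (simp add: add.commute algebra_simps)
  qed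
  have fpos: "f x > 0" for x
  proof -
    have "(fe 0 0)^2 \<le> fe 0 (x/2 + x/2) * fe 0 (-x/2 + -x/2)"
      by (rule quad(1)) (use mix[where y="x/2" and z="-x/2"] in simp)
    moreover have "fe 0 0 = b 0" using f0 unfolding ff(1) .
    moreover have "fe 0 (-x/2 + -x/2) \<ge> 0"
      by (rule quad(3)) (use mix[where y="x/2" and z="-x/2"] in simp)
    moreover have "fe 0 (x/2 + x/2) \<ge> 0"
      by (rule quad(2)) (use mix[where y="x/2" and z="-x/2"] in simp)
    ultimately have "fe 0 x > 0" using b0
      by (smt (verit, best) field_sum_of_halves mult_eq_0_iff zero_less_power2)
    then show ?thesis using ff(1) by simp
  qed
  have key: "f1 x * f1 x \<le> f x * f2 x" for x
  proof -
    define y where "y = x/2"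
    have "0 \<le> l^2 * fe 0 (y+y) + 2*l*m * fe 1 (y+y) + m^2 * fe 2 (y+y)" for l m
    proof -
      have lim: "(\<lambda>N. l^2 * Qs b N (pv y) (pv y) 0 + 2*l*m * Qs b N (pv y) (pv y) 1 + m^2 * Qs b N (pv y) (pv y) 2)
          \<longlonglongrightarrow> l^2 * fe 0 (y+y) + 2*l*m * fe 1 (y+y) + m^2 * fe 2 (y+y)"
        by (intro tendsto_intros Qlim) auto
      have "\<forall>N. 0 \<le> l^2 * Qs b N (pv y) (pv y) 0 + 2*l*m * Qs b N (pv y) (pv y) 1 + m^2 * Qs b N (pv y) (pv y) 2"
        using PSD_D[OF P, where v="pv y" and l=l and m=m] unfolding Qs_expand2 by blast
      then show ?thesis by (intro LIMSEQ_le_const[OF lim]) auto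
    qed
    then have "(fe 1 (y+y))^2 \<le> fe 0 (y+y) * fe 2 (y+y)" by (rule quad(1))
    moreover have "y + y = x" unfolding y_def by simp
    ultimately show ?thesis using ff by (simp add: power2_eq_square)
  qed
  have D1: "(f has_real_derivative f1 x) (at x)" for x
    unfolding f_def[abs_def] f1_def by (rule termdiffs_strong_converges_everywhere[OF Sc])
  have D2: "(f1 has_real_derivative f2 x) (at x)" for x
    unfolding f1_def[abs_def] f2_def by (rule termdiffs_strong_converges_everywhere[OF S1])
  have conv: "convex_on UNIV (\<lambda>x. ln (f x))"
  proof (rule f''_ge0_imp_convex[where f' = "\<lambda>x. f1 x / f x" and f'' = "\<lambda>x. (f2 x * f x - f1 x * f1 x) / (f x * f x)"])
    show "convex (UNIV::real set)" by simp
    fix x :: real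
    have fx: "f x > 0" by (rule fpos)
    show "((\<lambda>x. ln (f x)) has_real_derivative f1 x / f x) (at x)"
      using DERIV_chain2[OF DERIV_ln_divide[OF fx] D1] by simp
    show "((\<lambda>x. f1 x / f x) has_real_derivative (f2 x * f x - f1 x * f1 x) / (f x * f x)) (at x)"
      using DERIV_divide[OF D2 D1 fx[THEN less_imp_neq, symmetric]] by simp
    show "(f2 x * f x - f1 x * f1 x) / (f x * f x) \<ge> 0"
      using key[of x] fx by (simp add: mult.commute)
  qed
  show ?thesis using fpos conv unfolding f_def c_def by simp
qed


lemma poch_mult:
  fixes m n :: nat and z :: real assumes m: "m \<ge> 1"
  shows "pochhammer (real m * z) (m * n) = real m ^ (m*n) * (\<Prod>j<m. pochhammer (z + real j / real m) n)"
proof (induction n)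
  case 0 then show ?case by simp
next
  case (Suc n)
  have mp: "real m > 0" using m by simp
  have "pochhammer (real m * z) (m * Suc n) = pochhammer (real m * z) (m*n) * pochhammer (real m * z + real (m*n)) m"
  proof -
    have e: "m * Suc n = m*n + m" by simp
    show ?thesis by (simp only: e pochhammer_product')
  qed
  also have "pochhammer (real m * z + real (m*n)) m = (\<Prod>j<m. real m * (z + real j / real m + real n))"
    unfolding pochhammer_prod atLeast0LessThan
    by (rule prod.cong[OF refl]) (use mp in \<open>simp add: field_simps\<close>)
  also have "\<dots> = real m ^ m * (\<Prod>j<m. (z + real j / real m + real n))"
    by (simp add: prod.distrib)
  also have "pochhammer (real m * z) (m*n) = real m ^ (m*n) * (\<Prod>j<m. pochhammer (z + real j / real m) n)" by (rule Suc.IH)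
  finally have "pochhammer (real m * z) (m * Suc n) = real m ^ (m*n) * real m ^ m *
     ((\<Prod>j<m. pochhammer (z + real j / real m) n) * (\<Prod>j<m. (z + real j / real m + real n)))"
    by (simp add: mult_ac)
  also have "(\<Prod>j<m. pochhammer (z + real j / real m) n) * (\<Prod>j<m. (z + real j / real m + real n))
      = (\<Prod>j<m. pochhammer (z + real j / real m) (Suc n))"
    by (simp add: pochhammer_rec' prod.distrib[symmetric] mult.commute)
  also have "real m ^ (m*n) * real m ^ m = real m ^ (m * Suc n)" by (simp add: power_add[symmetric] add.commute)
  finally show ?case .
qed

lemma gauss_ident:
  fixes m n :: nat and z :: real assumes m: "m \<ge> 1" and n: "n \<ge> 1" and z: "z > 0"
  defines "D \<equiv> fact (m*n - 1) / (real m ^ (m*n) * fact (n-1) ^ m * exp (\<Sum>j<m. real j / real m * ln (real n)))"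
  shows "Gamma_series' (real m * z) (m*n) = exp (real m * z * ln (real m)) * D * (\<Prod>j<m. Gamma_series' (z + real j / real m) n)"
proof -
  have mp: "real m > 0" "real n > 0" using m n by auto
  have pp: "pochhammer (z + real j / real m) n > 0" for j using z by (intro pochhammer_pos) (simp add: add_pos_nonneg)
  have lhs: "Gamma_series' (real m * z) (m*n) = fact (m*n - 1) * (exp (real m * z * ln (real m)) * exp (real m * z * ln (real n)))
      / (real m ^ (m*n) * (\<Prod>j<m. pochhammer (z + real j / real m) n))"
    unfolding Gamma_series'_def poch_mult[OF m] using mp by (simp add: ln_mult exp_add[symmetric] algebra_simps)
  have "(\<Prod>j<m. Gamma_series' (z + real j / real m) n)
      = (\<Prod>j<m. fact (n-1) * exp ((z + real j / real m) * ln (real n)) / pochhammer (z + real j / real m) n)"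
    unfolding Gamma_series'_def by simp
  also have "\<dots> = fact (n-1) ^ m * exp (\<Sum>j<m. (z + real j / real m) * ln (real n)) / (\<Prod>j<m. pochhammer (z + real j / real m) n)"
    by (simp add: prod_dividef prod.distrib exp_sum)
  also have "(\<Sum>j<m. (z + real j / real m) * ln (real n)) = real m * z * ln (real n) + (\<Sum>j<m. real j / real m * ln (real n))"
    by (simp add: sum.distrib distrib_right)
  finally have rhs: "(\<Prod>j<m. Gamma_series' (z + real j / real m) n) = fact (n-1) ^ m * (exp (real m * z * ln (real n)) * exp (\<Sum>j<m. real j / real m * ln (real n)))
      / (\<Prod>j<m. pochhammer (z + real j / real m) n)" by (simp add: exp_add)
  have P: "(\<Prod>j<m. pochhammer (z + real j / real m) n) > 0" by (intro prod_pos) (use pp in auto)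
  show ?thesis unfolding lhs rhs D_def using P mp by (simp add: field_simps)
qed


lemma GS'_pos: fixes z :: real assumes "z > 0" "n \<ge> 1" shows "Gamma_series' z n > 0"
  unfolding Gamma_series'_def using assms by (simp add: pochhammer_pos)

lemma gauss_mult:
  fixes m :: nat assumes m: "m \<ge> 1"
  shows "\<exists>A>0. \<forall>z>0. Gamma (real m * z) = A * exp (real m * z * ln (real m)) * (\<Prod>j<m. Gamma (z + real j / real m))"
proof -
  define D where "D n = fact (m*n - 1) / (real m ^ (m*n) * fact (n-1) ^ m * exp (\<Sum>j<m. real j / real m * ln (real n)))" for n
  define E where "E z = exp (real m * z * ln (real m))" for z :: real
  define X where "X z n = Gamma_series' (real m * z) (m*n)" for z :: real and n
  define Y where "Y z n = (\<Prod>j<m. Gamma_series' (z + real j / real m) n)" for z :: real and n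
  have ident: "X z n = E z * D n * Y z n" if "z > 0" "n \<ge> 1" for z n
    unfolding X_def E_def D_def Y_def by (rule gauss_ident[OF m that(2) that(1)])
  have sm: "strict_mono (\<lambda>n. m*n)" using m by (intro strict_monoI) simp
  have LX: "X z \<longlonglongrightarrow> Gamma (real m * z)" for z
    using LIMSEQ_subseq_LIMSEQ[OF Gamma_series'_LIMSEQ sm] unfolding X_def[abs_def] o_def .
  have LY: "Y z \<longlonglongrightarrow> (\<Prod>j<m. Gamma (z + real j / real m))" for z
    unfolding Y_def[abs_def] by (intro tendsto_prod Gamma_series'_LIMSEQ)
  have Ypos: "Y z n > 0" if "z > 0" "n \<ge> 1" for z n
    unfolding Y_def using that by (intro prod_pos GS'_pos) (auto intro: add_pos_nonneg)
  have Gpos: "(\<Prod>j<m. Gamma (z + real j / real m)) > 0" if "z > 0" for z :: real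
    using that by (intro prod_pos Gamma_real_pos) (auto intro: add_pos_nonneg)
  have Epos: "E z > 0" for z unfolding E_def by simp
  define A where "A = Gamma (real m * 1) / (E 1 * (\<Prod>j<m. Gamma (1 + real j / real m)))"
  have Apos: "A > 0" unfolding A_def using m Epos Gpos[of 1] by (intro divide_pos_pos mult_pos_pos Gamma_real_pos) auto
  have "(\<lambda>n. X 1 n / (E 1 * Y 1 n)) \<longlonglongrightarrow> A"
  proof -
    have g1: "Gamma (1 + real j / real m) > 0" for j by (intro Gamma_real_pos) (simp add: add_pos_nonneg)
    show ?thesis unfolding A_def using Epos[of 1] Gpos[of 1] g1 by (intro tendsto_intros LX LY) (auto simp: less_imp_neq[symmetric])
  qed
  moreover have "eventually (\<lambda>n. X 1 n / (E 1 * Y 1 n) = D n) sequentially"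
    using eventually_ge_at_top[of 1]
  proof eventually_elim
    case (elim n)
    then show ?case using ident[of 1 n] Ypos[of 1 n] Epos[of 1] by (simp add: field_simps)
  qed
  ultimately have LD: "D \<longlonglongrightarrow> A" by (rule Lim_transform_eventually)
  have "Gamma (real m * z) = A * E z * (\<Prod>j<m. Gamma (z + real j / real m))" if z: "z > 0" for z
  proof -
    have "(\<lambda>n. E z * D n * Y z n) \<longlonglongrightarrow> E z * A * (\<Prod>j<m. Gamma (z + real j / real m))"
      by (intro tendsto_intros LD LY)
    moreover have "eventually (\<lambda>n. E z * D n * Y z n = X z n) sequentially"
      using eventually_ge_at_top[of 1] by eventually_elim (use ident z in simp)
    ultimately have "X z \<longlonglongrightarrow> E z * A * (\<Prod>j<m. Gamma (z + real j / real m))" by (rule Lim_transform_eventually)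
    from LIMSEQ_unique[OF LX this] show ?thesis by (simp add: mult_ac)
  qed
  with Apos show ?thesis unfolding E_def by blast
qed


definition Fq :: "nat \<Rightarrow> nat \<Rightarrow> nat \<Rightarrow> nat \<Rightarrow> real" where
  "Fq p q j k = Gamma (real k / real q + real (j+1) / real q) / (if j < p then Gamma (real k / real q + real (j+1) / real p) else 1)"

lemma prod_if_lt: fixes p q :: nat assumes "p \<le> q" shows "(\<Prod>j<q. if j < p then H j else (1::real)) = (\<Prod>j<p. H j)"
proof -
  have "(\<Prod>j<q. if j < p then H j else (1::real)) = (\<Prod>j<p. if j < p then H j else (1::real))"
    apply (rule prod.mono_neutral_right) using assms by auto
  also have "\<dots> = (\<Prod>j<p. H j)" by (rule prod.cong) auto
  finally show ?thesis .
qed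

lemma b_decomp:
  fixes p q :: nat assumes pq: "1 \<le> p" "p < q"
  shows "\<exists>K>0. \<exists>C>0. \<forall>k. fact k / Gamma (real p / real q * real k + 1) = K * (C^k * (\<Prod>j<q. Fq p q j k))"
proof -
  have q1: "q \<ge> 1" using pq by simp
  have pp: "real p > 0" "real q > 0" using pq by auto
  obtain Aq where Aq: "Aq > 0" "\<And>z. z > 0 \<Longrightarrow> Gamma (real q * z) = Aq * exp (real q * z * ln (real q)) * (\<Prod>j<q. Gamma (z + real j / real q))"
    using gauss_mult[OF q1] by blast
  obtain Ap where Ap: "Ap > 0" "\<And>z. z > 0 \<Longrightarrow> Gamma (real p * z) = Ap * exp (real p * z * ln (real p)) * (\<Prod>j<p. Gamma (z + real j / real p))"
    using gauss_mult[OF pq(1)] by blast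
  define K where "K = Aq / Ap * exp (ln (real q) - ln (real p))"
  define C where "C = exp (ln (real q) - real p / real q * ln (real p))"
  have "fact k / Gamma (real p / real q * real k + 1) = K * (C^k * (\<Prod>j<q. Fq p q j k))" for k
  proof -
    define G where "G j = Gamma (real k / real q + real (j+1) / real q)" for j
    define H where "H j = Gamma (real k / real q + real (j+1) / real p)" for j
    have z1: "(real k + 1) / real q > 0" using pp by simp
    have z2: "real k / real q + 1 / real p > 0" using pp by (simp add: add_nonneg_pos)
    have gf: "Gamma (1 + real k) = fact k" by (rule Gamma_fact)
    have "fact k = Gamma (real q * ((real k + 1) / real q))"
      using gf pp by (simp add: add.commute)
    also have "\<dots> = Aq * exp ((real k + 1) * ln (real q)) * (\<Prod>j<q. G j)"
      unfolding Aq(2)[OF z1] G_def using pp by (simp add: field_simps)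
    finally have num: "fact k = Aq * exp ((real k + 1) * ln (real q)) * (\<Prod>j<q. G j)" .
    have ar: "real p / real q * real k + 1 = real p * (real k / real q + 1 / real p)"
      using pp by (simp add: field_simps)
    have "Gamma (real p / real q * real k + 1) = Gamma (real p * (real k / real q + 1 / real p))"
      by (simp only: ar)
    also have "\<dots> = Ap * exp ((real p / real q * real k + 1) * ln (real p)) * (\<Prod>j<p. H j)"
      unfolding Ap(2)[OF z2] H_def using pp by (simp add: field_simps)
    finally have den: "Gamma (real p / real q * real k + 1) = Ap * exp ((real p / real q * real k + 1) * ln (real p)) * (\<Prod>j<p. H j)" .
    have Hpos: "(\<Prod>j<p. H j) > 0" unfolding H_def using pp by (intro prod_pos Gamma_real_pos) (simp add: add_nonneg_pos)
    have ex: "exp ((real k + 1) * ln (real q)) / exp ((real p / real q * real k + 1) * ln (real p)) = exp (ln (real q) - ln (real p)) * C^k"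
    proof -
      have "(real k + 1) * ln (real q) - (real p / real q * real k + 1) * ln (real p) = (ln (real q) - ln (real p)) + real k * (ln (real q) - real p / real q * ln (real p))"
        by (simp add: algebra_simps)
      then show ?thesis unfolding C_def by (simp add: exp_diff[symmetric] exp_add exp_of_nat_mult)
    qed
    have pr: "(\<Prod>j<q. G j) / (\<Prod>j<p. H j) = (\<Prod>j<q. Fq p q j k)"
    proof -
      have "(\<Prod>j<q. Fq p q j k) = (\<Prod>j<q. G j / (if j < p then H j else 1))"
        unfolding Fq_def G_def H_def by simp
      also have "\<dots> = (\<Prod>j<q. G j) / (\<Prod>j<q. if j < p then H j else 1)" by (rule prod_dividef)
      also have "(\<Prod>j<q. if j < p then H j else 1) = (\<Prod>j<p. H j)" using pq by (intro prod_if_lt) simp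
      finally show ?thesis by simp
    qed
    have "fact k / Gamma (real p / real q * real k + 1)
        = (Aq / Ap) * (exp ((real k + 1) * ln (real q)) / exp ((real p / real q * real k + 1) * ln (real p))) * ((\<Prod>j<q. G j) / (\<Prod>j<p. H j))"
      unfolding num den using Ap Hpos by (simp add: field_simps)
    also have "\<dots> = K * (C^k * (\<Prod>j<q. Fq p q j k))" unfolding ex pr K_def by (simp add: mult_ac)
    finally show ?thesis .
  qed
  moreover have "K > 0" "C > 0" unfolding K_def C_def using Aq Ap by auto
  ultimately show ?thesis by blast
qed


lemma powr_pow_mult:
  fixes t q c :: real assumes t: "t \<ge> 0" and q: "q > 0"
  shows "(t powr (1/q))^k * t powr c = t powr (real k / q + c)"
proof (cases "t = 0")
  case True then show ?thesis by simp
next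
  case False
  then have tp: "t > 0" using t by simp
  have "(t powr (1/q))^k = (t powr (1/q)) powr (real k)" using tp by (simp add: powr_realpow)
  also have "\<dots> = t powr (real k / q)" by (simp add: powr_powr)
  finally show ?thesis by (simp add: powr_add)
qed

lemma Fq_int:
  fixes p q j :: nat assumes pq: "1 \<le> p" "p < q" and j: "j < q"
  shows "\<exists>\<phi> w (S::real set). (\<forall>t\<in>S. w t \<ge> 0) \<and> (\<forall>k. ((\<lambda>t. \<phi> t ^ k * w t) has_integral Fq p q j k) S)"
proof -
  have pp: "real p > 0" "real q > 0" using pq by auto
  define a where "a = real (j+1) / real q"
  have a: "a > 0" unfolding a_def using pp by simp
  show ?thesis
  proof (cases "j < p")
    case False
    define w where "w t = t powr (a - 1) / exp t" for t :: real
    have "((\<lambda>t. (t powr (1/real q)) ^ k * w t) has_integral Fq p q j k) {0..}" for k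
    proof -
      have x: "real k / real q + a > 0" using a pp by (simp add: add_nonneg_pos)
      have I: "((\<lambda>t. t powr (real k / real q + a - 1) / exp t) has_integral Gamma (real k / real q + a)) {0..}"
        by (rule Gamma_integral_real[OF x])
      have F: "Fq p q j k = Gamma (real k / real q + a)" unfolding Fq_def a_def using False by simp
      show ?thesis unfolding F
      proof (rule has_integral_eq[OF _ I])
        fix t :: real assume "t \<in> {0..}"
        then have t: "t \<ge> 0" by simp
        show "t powr (real k / real q + a - 1) / exp t = (t powr (1/real q))^k * w t"
          unfolding w_def using powr_pow_mult[OF t pp(2), of k "a-1"] by (simp add: algebra_simps)
      qed
    qed
    then have H: "\<forall>k. ((\<lambda>t. (t powr (1/real q)) ^ k * w t) has_integral Fq p q j k) {0..}" by blast
    have W: "\<forall>t\<in>{0..}. w t \<ge> 0" unfolding w_def by simp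
    show ?thesis
      apply (rule exI[where x="\<lambda>t. t powr (1/real q)"])
      apply (rule exI[where x=w])
      apply (rule exI[where x="{0..}"])
      using W H by simp
  next
    case True
    define b where "b = real (j+1) / real p"
    define y where "y = b - a"
    have y: "y > 0" unfolding y_def a_def b_def using pq pp by (simp add: frac_less2)
    define w where "w t = t powr (a - 1) * (1 - t) powr (y - 1) / Gamma y" for t :: real
    have "((\<lambda>t. (t powr (1/real q)) ^ k * w t) has_integral Fq p q j k) {0..1}" for k
    proof -
      have x: "real k / real q + a > 0" using a pp by (simp add: add_nonneg_pos)
      have I: "((\<lambda>t. t powr (real k / real q + a - 1) * (1 - t) powr (y - 1) / Gamma y) has_integral Beta (real k / real q + a) y / Gamma y) {0..1}"
        by (rule has_integral_divide[OF has_integral_Beta_real[OF x y]])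
      have F: "Fq p q j k = Beta (real k / real q + a) y / Gamma y"
      proof -
        have e: "real k / real q + a + y = real k / real q + real (j+1) / real p" unfolding y_def b_def by simp
        have g: "Gamma y > 0" using y by simp
        show ?thesis unfolding Fq_def Beta_def e using True g by (simp add: a_def)
      qed
      show ?thesis unfolding F
      proof (rule has_integral_eq[OF _ I])
        fix t :: real assume "t \<in> {0..1}"
        then have t: "t \<ge> 0" by simp
        show "t powr (real k / real q + a - 1) * (1 - t) powr (y - 1) / Gamma y = (t powr (1/real q))^k * w t"
          unfolding w_def using powr_pow_mult[OF t pp(2), of k "a-1"] by (simp add: algebra_simps)
      qed
    qed
    then have H: "\<forall>k. ((\<lambda>t. (t powr (1/real q)) ^ k * w t) has_integral Fq p q j k) {0..1}" by blast
    have W: "\<forall>t\<in>{0..1}. w t \<ge> 0" unfolding w_def using y by simp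
    show ?thesis
      apply (rule exI[where x="\<lambda>t. t powr (1/real q)"])
      apply (rule exI[where x=w])
      apply (rule exI[where x="{0..1}"])
      using W H by simp
  qed
qed

lemma PSD_rational:
  fixes p q :: nat assumes pq: "1 \<le> p" "p < q"
  shows "PSD (\<lambda>k. fact k / Gamma (real p / real q * real k + 1))"
proof -
  obtain K C where KC: "K > 0" "C > 0" "\<And>k. fact k / Gamma (real p / real q * real k + 1) = K * (C^k * (\<Prod>j<q. Fq p q j k))"
    using b_decomp[OF pq] by blast
  have "PSD (\<lambda>k. \<Prod>j<q. Fq p q j k)" by (rule PSD_prod, rule Fq_int[OF pq])
  then have "PSD (\<lambda>k. K * (C^k * (\<Prod>j<q. Fq p q j k)))" using KC by (intro PSD_scale PSD_geom) auto
  then show ?thesis using KC(3) by simp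
qed


lemma rational_logconvex:
  fixes p q :: nat assumes pq: "1 \<le> p" "p < q"
  shows "(\<forall>x. mittag_leffler (real p / real q) x > 0) \<and> convex_on UNIV (\<lambda>x. ln (mittag_leffler (real p / real q) x))"
proof -
  define \<alpha> where "\<alpha> = real p / real q"
  have a0: "\<alpha> > 0" unfolding \<alpha>_def using pq by simp
  define b where "b k = fact k / Gamma (\<alpha> * real k + 1)" for k
  have P: "PSD b" unfolding b_def \<alpha>_def by (rule PSD_rational[OF pq])
  have bnn: "b k \<ge> 0" for k unfolding b_def using aML_pos[of \<alpha> k] a0 by (simp add: aML_def)
  have b0: "b 0 > 0" unfolding b_def by simp
  have ba: "b n / fact n = aML \<alpha> n" for n unfolding b_def aML_def by (simp add: divide_inverse)
  have S: "summable (\<lambda>n. b n / fact n * y^n)" for y unfolding ba by (rule mlf_summable[OF a0])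
  have E: "mittag_leffler \<alpha> x = (\<Sum>n. b n / fact n * x^n)" for x unfolding mlf_eq ba ..
  show ?thesis using PSD_logconvex[OF P bnn b0 S] unfolding \<alpha>_def[symmetric] E by simp
qed

lemma mlf_tendsto:
  fixes \<alpha> :: real and r :: "nat \<Rightarrow> real"
  assumes a0: "\<alpha> > 0" and r: "r \<longlonglongrightarrow> \<alpha>"
  shows "(\<lambda>n. mittag_leffler (r n) x) \<longlonglongrightarrow> mittag_leffler \<alpha> x"
proof -
  have h: "\<alpha>/2 > 0" using a0 by simp
  obtain B where B: "\<And>\<beta> k. \<beta> \<ge> \<alpha>/2 \<Longrightarrow> \<bar>x\<bar>^k / Gamma (\<beta> * real k + 1) \<le> B * (1/2)^k"
    using mlf_bound[OF h, of x] by blast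
  have ev: "eventually (\<lambda>n. r n > \<alpha>/2) sequentially" by (rule order_tendstoD(1)[OF r]) (use a0 in simp)
  have lim: "(\<lambda>n. x^k / Gamma (r n * real k + 1)) \<longlonglongrightarrow> x^k / Gamma (\<alpha> * real k + 1)" for k
  proof -
    have pos: "\<alpha> * real k + 1 > 0" using a0 by (simp add: add_nonneg_pos)
    then have np: "\<alpha> * real k + 1 \<notin> \<int>\<^sub>\<le>\<^sub>0" by (auto elim!: nonpos_Ints_cases)
    have "(\<lambda>n. r n * real k + 1) \<longlonglongrightarrow> \<alpha> * real k + 1" by (intro tendsto_intros r)
    have "(\<lambda>n. Gamma (r n * real k + 1)) \<longlonglongrightarrow> Gamma (\<alpha> * real k + 1)"
    proof -
      have ic: "isCont Gamma (\<alpha> * real k + 1)" using isCont_Gamma[where f="\<lambda>x. x" and z="\<alpha> * real k + 1"] np by simp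
      show ?thesis by (rule isCont_tendsto_compose[OF ic \<open>(\<lambda>n. r n * real k + 1) \<longlonglongrightarrow> \<alpha> * real k + 1\<close>])
    qed
    then show ?thesis by (rule tendsto_divide[OF tendsto_const]) (use Gamma_real_pos[OF pos] in simp)
  qed
  have bound: "eventually (\<lambda>(k,n). norm (x^k / Gamma (r n * real k + 1)) \<le> B * (1/2)^k) (at_top \<times>\<^sub>F sequentially)"
    unfolding eventually_prod_filter
  proof (intro exI conjI)
    show "eventually (\<lambda>k::nat. True) at_top" by simp
    show "eventually (\<lambda>n. r n > \<alpha>/2) sequentially" by (rule ev)
    show "\<forall>k n. True \<longrightarrow> r n > \<alpha>/2 \<longrightarrow> (case (k, n) of (k, n) \<Rightarrow> norm (x^k / Gamma (r n * real k + 1)) \<le> B * (1/2)^k)"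
    proof (intro allI impI)
      fix k n assume "r n > \<alpha>/2"
      then have rr: "r n \<ge> \<alpha>/2" by simp
      have "r n * real k \<ge> 0" using rr h by simp
      then have "Gamma (r n * real k + 1) > 0" by simp
      then have "norm (x^k / Gamma (r n * real k + 1)) = \<bar>x\<bar>^k / Gamma (r n * real k + 1)"
        by (simp add: power_abs)
      then show "case (k, n) of (k, n) \<Rightarrow> norm (x^k / Gamma (r n * real k + 1)) \<le> B * (1/2)^k"
        using B[OF rr, of k] by simp
    qed
  qed
  have sm: "summable (\<lambda>k. B * (1/2::real)^k)" by (intro summable_mult summable_geometric) simp
  have "((\<lambda>n. \<Sum>k. x^k / Gamma (r n * real k + 1)) \<longlongrightarrow> (\<Sum>k. x^k / Gamma (\<alpha> * real k + 1))) sequentially"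
    using tannerys_theorem[OF lim bound sm] by simp
  then show ?thesis unfolding mittag_leffler_def .
qed


lemma mlf_zero: "mittag_leffler \<alpha> 0 = 1"
  unfolding mlf_eq using powser_zero[of "aML \<alpha>"] by (simp add: aML_0)

lemma rat_seq:
  fixes \<alpha> :: real assumes a: "0 < \<alpha>" "\<alpha> < 1"
  shows "\<exists>p q :: nat \<Rightarrow> nat. eventually (\<lambda>n. 1 \<le> p n \<and> p n < q n) sequentially \<and> (\<lambda>n. real (p n) / real (q n)) \<longlonglongrightarrow> \<alpha>"
proof -
  define q where "q n = Suc n" for n
  define p where "p n = nat \<lfloor>\<alpha> * real (Suc n)\<rfloor>" for n
  have fl: "real (p n) = of_int \<lfloor>\<alpha> * real (Suc n)\<rfloor>" for n
    unfolding p_def using a by simp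
  have ev: "eventually (\<lambda>n. 1 \<le> p n \<and> p n < q n) sequentially"
    using eventually_ge_at_top[of "nat \<lceil>1/\<alpha>\<rceil>"]
  proof eventually_elim
    case (elim n)
    have "real (Suc n) \<ge> 1/\<alpha>" using elim by linarith
    then have "\<alpha> * real (Suc n) \<ge> 1" using a by (simp add: field_simps)
    then have p1: "1 \<le> p n" unfolding p_def by linarith
    have "\<alpha> * real (Suc n) < real (Suc n)" using a by simp
    then have "p n < q n" unfolding p_def q_def by linarith
    with p1 show ?case by simp
  qed
  have up: "real (p n) / real (q n) \<le> \<alpha>" for n
  proof -
    have "real (p n) \<le> \<alpha> * real (Suc n)" unfolding fl by linarith
    then show ?thesis unfolding q_def by (simp add: divide_le_eq)
  qed
  have lo: "\<alpha> - inverse (real (Suc n)) \<le> real (p n) / real (q n)" for n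
  proof -
    have "real (p n) \<ge> \<alpha> * real (Suc n) - 1" unfolding fl by linarith
    then have "(\<alpha> * real (Suc n) - 1) / real (Suc n) \<le> real (p n) / real (Suc n)"
      by (rule divide_right_mono) simp
    moreover have "\<alpha> - inverse (real (Suc n)) = (\<alpha> * real (Suc n) - 1) / real (Suc n)"
      by (simp add: field_simps)
    ultimately show ?thesis unfolding q_def by simp
  qed
  have "(\<lambda>n. \<alpha> - inverse (real (Suc n))) \<longlonglongrightarrow> \<alpha> - 0"
    by (intro tendsto_intros LIMSEQ_inverse_real_of_nat)
  then have L: "(\<lambda>n. \<alpha> - inverse (real (Suc n))) \<longlonglongrightarrow> \<alpha>" by simp
  have "(\<lambda>n. real (p n) / real (q n)) \<longlonglongrightarrow> \<alpha>"
    by (rule tendsto_sandwich[OF _ _ L tendsto_const]) (use up lo in auto)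
  with ev show ?thesis by blast
qed

lemma convex_part:
  fixes \<alpha> :: real assumes a: "0 < \<alpha>" "\<alpha> < 1"
  shows "(\<forall>x. mittag_leffler \<alpha> x > 0) \<and> convex_on UNIV (\<lambda>x. ln (mittag_leffler \<alpha> x))"
proof -
  obtain p q :: "nat \<Rightarrow> nat" where ev: "eventually (\<lambda>n. 1 \<le> p n \<and> p n < q n) sequentially"
    and L: "(\<lambda>n. real (p n) / real (q n)) \<longlonglongrightarrow> \<alpha>"
    using rat_seq[OF a] by blast
  define r where "r n = real (p n) / real (q n)" for n
  have L': "r \<longlonglongrightarrow> \<alpha>" using L unfolding r_def[abs_def] .
  have EV: "eventually (\<lambda>n. (\<forall>x. mittag_leffler (r n) x > 0) \<and> convex_on UNIV (\<lambda>x. ln (mittag_leffler (r n) x))) sequentially"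
    using ev by eventually_elim (unfold r_def, rule rational_logconvex, auto)
  have T: "(\<lambda>n. mittag_leffler (r n) x) \<longlonglongrightarrow> mittag_leffler \<alpha> x" for x
    by (rule mlf_tendsto[OF a(1) L'])
  have pos: "mittag_leffler \<alpha> x > 0" for x
  proof -
    have "eventually (\<lambda>n. 1 \<le> mittag_leffler (r n) x * mittag_leffler (r n) (-x)) sequentially"
      using EV
    proof eventually_elim
      case (elim n)
      have A: "mittag_leffler (r n) x > 0" "mittag_leffler (r n) (-x) > 0" using elim by auto
      have "ln (mittag_leffler (r n) ((1 - 1/2) *\<^sub>R x + (1/2) *\<^sub>R (-x))) \<le> (1 - 1/2) * ln (mittag_leffler (r n) x) + (1/2) * ln (mittag_leffler (r n) (-x))"
        using elim by (intro convex_onD[where f="\<lambda>x. ln (mittag_leffler (r n) x)"]) auto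
      then have "0 \<le> ln (mittag_leffler (r n) x) + ln (mittag_leffler (r n) (-x))" by (simp add: mlf_zero)
      then have "0 \<le> ln (mittag_leffler (r n) x * mittag_leffler (r n) (-x))" using A by (simp add: ln_mult)
      then show ?case using A by (simp add: ln_ge_zero_iff)
    qed
    then have P1: "1 \<le> mittag_leffler \<alpha> x * mittag_leffler \<alpha> (-x)"
      by (intro tendsto_le[OF _ tendsto_mult[OF T T] tendsto_const]) auto
    have "eventually (\<lambda>n. 0 \<le> mittag_leffler (r n) x) sequentially"
      using EV by eventually_elim (auto intro: less_imp_le)
    then have "0 \<le> mittag_leffler \<alpha> x" by (intro tendsto_le[OF _ T tendsto_const]) auto
    moreover have "mittag_leffler \<alpha> x \<noteq> 0" using P1 by auto
    ultimately show ?thesis by simp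
  qed
  have conv: "convex_on UNIV (\<lambda>x. ln (mittag_leffler \<alpha> x))"
  proof (rule convex_onI)
    show "convex (UNIV :: real set)" by simp
    fix t x y :: real assume t: "0 < t" "t < 1" and "x \<in> UNIV" "y \<in> UNIV"
    define z where "z = (1 - t) *\<^sub>R x + t *\<^sub>R y"
    have lnT: "(\<lambda>n. ln (mittag_leffler (r n) w)) \<longlonglongrightarrow> ln (mittag_leffler \<alpha> w)" for w
      by (rule tendsto_ln[OF T]) (use pos[of w] in simp)
    have "eventually (\<lambda>n. ln (mittag_leffler (r n) z) \<le> (1 - t) * ln (mittag_leffler (r n) x) + t * ln (mittag_leffler (r n) y)) sequentially"
      using EV
    proof eventually_elim
      case (elim n)
      then show ?case unfolding z_def using t by (intro convex_onD[where f="\<lambda>x. ln (mittag_leffler (r n) x)"]) auto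
    qed
    then have "ln (mittag_leffler \<alpha> z) \<le> (1 - t) * ln (mittag_leffler \<alpha> x) + t * ln (mittag_leffler \<alpha> y)"
      by (intro tendsto_le[OF _ _ lnT]) (auto intro!: tendsto_intros lnT)
    then show "ln (mittag_leffler \<alpha> ((1 - t) *\<^sub>R x + t *\<^sub>R y)) \<le> (1 - t) * ln (mittag_leffler \<alpha> x) + t * ln (mittag_leffler \<alpha> y)"
      unfolding z_def .
  qed
  show ?thesis using pos conv by blast
qed

theorem proposition2p3:
  fixes \<alpha> :: real
  shows "(0 < \<alpha> \<and> \<alpha> < 1 \<longrightarrow> log_convex_on UNIV (mittag_leffler \<alpha>))
       \<and> (\<alpha> > 1 \<longrightarrow> log_concave_on {0<..} (mittag_leffler \<alpha>))"
proof (intro conjI impI)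
  assume "0 < \<alpha> \<and> \<alpha> < 1"
  then show "log_convex_on UNIV (mittag_leffler \<alpha>)"
    using convex_part[of \<alpha>] unfolding log_convex_on_def by auto
next
  assume a: "\<alpha> > 1"
  have e: "(\<lambda>x. ln (mittag_leffler \<alpha> x)) = (\<lambda>x. ln (\<Sum>k. aML \<alpha> k * x^k))" by (simp add: mlf_eq)
  have "\<forall>x\<in>{0<..}. mittag_leffler \<alpha> x > 0"
  proof
    fix x :: real assume "x \<in> {0<..}"
    then have "mittag_leffler \<alpha> x \<ge> 1" unfolding mlf_eq using a by (intro mlf_ge1) auto
    then show "mittag_leffler \<alpha> x > 0" by simp
  qed
  moreover have "concave_on {0<..} (\<lambda>x. ln (mittag_leffler \<alpha> x))" unfolding e by (rule concave_part[OF a])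
  ultimately show "log_concave_on {0<..} (mittag_leffler \<alpha>)" unfolding log_concave_on_def by blast
qed

end
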